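(* Let $(X,T)$ be a linearly recurrent minimal Cantor system with unique invariant probability measure $\mu$, given by a sequence of CKR partitions satisfying (KR1)–(KR6) and (LR), such that moreover all entries of $M(n)$ are at least $2$ for $n\ge2$, and $H(1)=(1,\dots,1)^T$. Let $v\in\mathbb R^{C(1)}$ satisfy $\sum_{n\ge2}\|P(n)v\|^2<\infty$. For $n\ge1$ define $g_n(x)=\sum_{j=1}^{n-1}\langle s_j(x),P(j)v\rangle$ (with $P(1)$ the identity). Then the sequence $f_n=g_n-\mathbb E_\mu(g_n)$ converges in $L^2(X,\mathcal B_X,\mu)$.
   Context: Minimal Cantor system, CKR partitions $\mathcal P(n)=\{T^{-j}B_k(n):1\le k\le C(n),0\le j<h_k(n)\}$ with $\mathcal P(0)$ trivial, roof $B(n)=\bigcup_kB_k(n)$, conditions (KR1) $B(n+1)\subseteq B(n)$; (KR2) $\mathcal P(n+1)$ refines $\mathcal P(n)$; (KR3) $\bigcap_nB(n)$ is one point; (KR4) the partitions generate the topology; (KR5) for all $n\ge1$, $k\le C(n-1)$, $l\le C(n)$ some $0\le j<h_l(n)$ has $T^{-j}B_l(n)\subseteq B_k(n-1)$; (KR6) $B(n)\subseteq B_1(n-1)$; (LR) $h_l(n)\le Lh_k(n-1)$ for a constant $L$. $M(n)$ is the $C(n)\times C(n-1)$ matrix with $m_{l,k}(n)=\#\{0\le j<h_l(n):T^{-j}B_l(n)\subseteq B_k(n-1)\}$; $H(n)=(h_k(n))^T_k$; $P(n)=M(n)\cdots M(2)$. $r_n(x)=\min\{j\ge0:T^jx\in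 B(n)\}$; for $n\ge1$, $s_{n}(x)\in\mathbb N^{C(n)}$ has coordinates $s_{n,t}(x)=\#\{j:r_{n}(x)<j\le r_{n+1}(x),\ T^jx\in B_t(n)\}$. $\|V\|=\max_j|v_j|$. *)

theory Defs
  imports "HOL-Probability.Probability"
begin

text \<open>Conventions: towers of the n-th CKR partition are indexed by k in {1..C n};
  B n k is the roof set B_k(n), h n k its height; T^{-j}B_k(n) is the preimage
  of B_k(n) under the j-th iterate of T.\<close>

definition is_cantor_space :: "'a::metric_space set \<Rightarrow> bool" where
  "is_cantor_space X \<longleftrightarrow> X \<noteq> {} \<and> compact X \<and>
     (\<forall>x\<in>X. connected_component_set X x = {x}) \<and> (\<forall>x\<in>X. x islimpt X)"

definition minimal_system :: "('a::topological_space \<Rightarrow> 'a) \<Rightarrow> bool" where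
  "minimal_system T \<longleftrightarrow> (\<forall>A. closed A \<and> T ` A = A \<longrightarrow> A = {} \<or> A = UNIV)"

definition tlevel :: "('a \<Rightarrow> 'a) \<Rightarrow> (nat \<Rightarrow> nat \<Rightarrow> 'a set) \<Rightarrow> nat \<Rightarrow> nat \<Rightarrow> nat \<Rightarrow> 'a set" where
  "tlevel T B n k j = (T ^^ j) -` B n k"

definition roof :: "(nat \<Rightarrow> nat) \<Rightarrow> (nat \<Rightarrow> nat \<Rightarrow> 'a set) \<Rightarrow> nat \<Rightarrow> 'a set" where
  "roof C B n = (\<Union>k\<in>{1..C n}. B n k)"

definition atoms :: "('a \<Rightarrow> 'a) \<Rightarrow> (nat \<Rightarrow> nat) \<Rightarrow> (nat \<Rightarrow> nat \<Rightarrow> nat)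
    \<Rightarrow> (nat \<Rightarrow> nat \<Rightarrow> 'a set) \<Rightarrow> nat \<Rightarrow> 'a set set" where
  "atoms T C h B n = {tlevel T B n k j | k j. k \<in> {1..C n} \<and> j < h n k}"

definition CKR_partition :: "('a::topological_space \<Rightarrow> 'a) \<Rightarrow> (nat \<Rightarrow> nat) \<Rightarrow> (nat \<Rightarrow> nat \<Rightarrow> nat)
    \<Rightarrow> (nat \<Rightarrow> nat \<Rightarrow> 'a set) \<Rightarrow> nat \<Rightarrow> bool" where
  "CKR_partition T C h B n \<longleftrightarrow> C n \<ge> 1 \<and>
     (\<forall>k\<in>{1..C n}. open (B n k) \<and> closed (B n k) \<and> B n k \<noteq> {} \<and> h n k \<ge> 1) \<and>
     (\<forall>k\<in>{1..C n}. \<forall>k'\<in>{1..C n}. \<forall>j<h n k. \<forall>j'<h n k'.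
        (k, j) \<noteq> (k', j') \<longrightarrow> tlevel T B n k j \<inter> tlevel T B n k' j' = {}) \<and>
     (\<Union>k\<in>{1..C n}. \<Union>j<h n k. tlevel T B n k j) = UNIV"

definition KR_sequence :: "('a::topological_space \<Rightarrow> 'a) \<Rightarrow> (nat \<Rightarrow> nat) \<Rightarrow> (nat \<Rightarrow> nat \<Rightarrow> nat)
    \<Rightarrow> (nat \<Rightarrow> nat \<Rightarrow> 'a set) \<Rightarrow> bool" where
  "KR_sequence T C h B \<longleftrightarrow>
     (\<forall>n. CKR_partition T C h B n) \<and>
     C 0 = 1 \<and> h 0 1 = 1 \<and> B 0 1 = UNIV \<and>
     \<comment> \<open>KR1\<close> (\<forall>n. roof C B (Suc n) \<subseteq> roof C B n) \<and>
     \<comment> \<open>KR2\<close> (\<forall>n. \<forall>A\<in>atoms T C h B (Suc n). \<exists>A'\<in>atoms T C h B n. A \<subseteq> A') \<and>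
     \<comment> \<open>KR3\<close> (\<exists>x. (\<Inter>n. roof C B n) = {x}) \<and>
     \<comment> \<open>KR4\<close> topological_basis (\<Union>n. atoms T C h B n) \<and>
     \<comment> \<open>KR5\<close> (\<forall>n\<ge>1. \<forall>k\<in>{1..C (n-1)}. \<forall>l\<in>{1..C n}. \<exists>j<h n l. tlevel T B n l j \<subseteq> B (n-1) k) \<and>
     \<comment> \<open>KR6\<close> (\<forall>n\<ge>1. roof C B n \<subseteq> B (n-1) 1)"

definition linearly_recurrent_KR :: "(nat \<Rightarrow> nat) \<Rightarrow> (nat \<Rightarrow> nat \<Rightarrow> nat) \<Rightarrow> bool" where
  "linearly_recurrent_KR C h \<longleftrightarrow> (\<exists>L::real. \<forall>n\<ge>1. \<forall>l\<in>{1..C n}. \<forall>k\<in>{1..C (n-1)}.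
      real (h n l) \<le> L * real (h (n-1) k))"

definition KR_M :: "('a \<Rightarrow> 'a) \<Rightarrow> (nat \<Rightarrow> nat \<Rightarrow> nat) \<Rightarrow> (nat \<Rightarrow> nat \<Rightarrow> 'a set) \<Rightarrow> nat \<Rightarrow> nat \<Rightarrow> nat \<Rightarrow> nat" where
  "KR_M T h B n l k = card {j. j < h n l \<and> tlevel T B n l j \<subseteq> B (n-1) k}"

text \<open>P(n) = M(n) ... M(2), a C(n) x C(1) matrix; P(1) = identity (P(0) is unused).\<close>
fun KR_P :: "('a \<Rightarrow> 'a) \<Rightarrow> (nat \<Rightarrow> nat) \<Rightarrow> (nat \<Rightarrow> nat \<Rightarrow> nat) \<Rightarrow> (nat \<Rightarrow> nat \<Rightarrow> 'a set)
    \<Rightarrow> nat \<Rightarrow> nat \<Rightarrow> nat \<Rightarrow> real" where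
  "KR_P T C h B 0 = (\<lambda>l k. if l = k then 1 else 0)"
| "KR_P T C h B (Suc 0) = (\<lambda>l k. if l = k then 1 else 0)"
| "KR_P T C h B (Suc (Suc n)) = (\<lambda>l k. \<Sum>m\<in>{1..C (Suc n)}.
      real (KR_M T h B (Suc (Suc n)) l m) * KR_P T C h B (Suc n) m k)"

definition KR_Pv :: "('a \<Rightarrow> 'a) \<Rightarrow> (nat \<Rightarrow> nat) \<Rightarrow> (nat \<Rightarrow> nat \<Rightarrow> nat) \<Rightarrow> (nat \<Rightarrow> nat \<Rightarrow> 'a set)
    \<Rightarrow> (nat \<Rightarrow> real) \<Rightarrow> nat \<Rightarrow> nat \<Rightarrow> real" where
  "KR_Pv T C h B v n l = (\<Sum>k\<in>{1..C 1}. KR_P T C h B n l k * v k)"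

definition KR_Pv_norm :: "('a \<Rightarrow> 'a) \<Rightarrow> (nat \<Rightarrow> nat) \<Rightarrow> (nat \<Rightarrow> nat \<Rightarrow> nat) \<Rightarrow> (nat \<Rightarrow> nat \<Rightarrow> 'a set)
    \<Rightarrow> (nat \<Rightarrow> real) \<Rightarrow> nat \<Rightarrow> real" where
  "KR_Pv_norm T C h B v n = Max ((\<lambda>l. \<bar>KR_Pv T C h B v n l\<bar>) ` {1..C n})"

definition return_time :: "('a \<Rightarrow> 'a) \<Rightarrow> (nat \<Rightarrow> nat) \<Rightarrow> (nat \<Rightarrow> nat \<Rightarrow> 'a set) \<Rightarrow> nat \<Rightarrow> 'a \<Rightarrow> nat" where
  "return_time T C B n x = (LEAST j. (T ^^ j) x \<in> roof C B n)"

definition KR_s :: "('a \<Rightarrow> 'a) \<Rightarrow> (nat \<Rightarrow> nat) \<Rightarrow> (nat \<Rightarrow> nat \<Rightarrow> 'a set) \<Rightarrow> nat \<Rightarrow> nat \<Rightarrow> 'a \<Rightarrow> nat" where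
  "KR_s T C B n t x = card {j. return_time T C B n x < j \<and> j \<le> return_time T C B (Suc n) x
      \<and> (T ^^ j) x \<in> B n t}"

definition KR_g :: "('a \<Rightarrow> 'a) \<Rightarrow> (nat \<Rightarrow> nat) \<Rightarrow> (nat \<Rightarrow> nat \<Rightarrow> nat) \<Rightarrow> (nat \<Rightarrow> nat \<Rightarrow> 'a set)
    \<Rightarrow> (nat \<Rightarrow> real) \<Rightarrow> nat \<Rightarrow> 'a \<Rightarrow> real" where
  "KR_g T C h B v n x = (\<Sum>j\<in>{1..<n}. \<Sum>t\<in>{1..C j}. real (KR_s T C B j t x) * KR_Pv T C h B v j t)"

definition invariant_prob :: "('a::topological_space \<Rightarrow> 'a) \<Rightarrow> 'a measure \<Rightarrow> bool" where
  "invariant_prob T \<mu> \<longleftrightarrow> prob_space \<mu> \<and> sets \<mu> = sets borel \<and> T \<in> measurable \<mu> \<mu> \<and> distr \<mu> \<mu> T = \<mu>"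

end

theory Submission
  imports Defs
begin

locale KRsys =
  fixes T :: "'a::metric_space \<Rightarrow> 'a" and C :: "nat \<Rightarrow> nat" and h :: "nat \<Rightarrow> nat \<Rightarrow> nat"
    and B :: "nat \<Rightarrow> nat \<Rightarrow> 'a set" and \<mu> :: "'a measure" and L :: real
  assumes bijT: "bij T" and contT: "continuous_on UNIV T"
    and KR: "KR_sequence T C h B"
    and inv_mu: "invariant_prob T \<mu>"
    and L2: "L \<ge> 2"
    and LR: "\<And>n l k. n \<ge> 1 \<Longrightarrow> l \<in> {1..C n} \<Longrightarrow> k \<in> {1..C (n-1)} \<Longrightarrow> real (h n l) \<le> L * real (h (n-1) k)"
    and M_ge2: "\<And>n l k. n \<ge> 2 \<Longrightarrow> l \<in> {1..C n} \<Longrightarrow> k \<in> {1..C (n-1)} \<Longrightarrow> KR_M T h B n l k \<ge> 2"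
begin

abbreviation "lev \<equiv> tlevel T B"

lemma CKR: "CKR_partition T C h B n" using KR unfolding KR_sequence_def by auto

lemma C_pos: "C n \<ge> 1" using CKR[of n] unfolding CKR_partition_def by auto
lemma B_ne: "k \<in> {1..C n} \<Longrightarrow> B n k \<noteq> {}" using CKR[of n] unfolding CKR_partition_def by auto
lemma B_open: "k \<in> {1..C n} \<Longrightarrow> open (B n k)" using CKR[of n] unfolding CKR_partition_def by auto
lemma h_pos: "k \<in> {1..C n} \<Longrightarrow> h n k \<ge> 1" using CKR[of n] unfolding CKR_partition_def by auto
lemma lv_disj: "k \<in> {1..C n} \<Longrightarrow> k' \<in> {1..C n} \<Longrightarrow> j < h n k \<Longrightarrow> j' < h n k' \<Longrightarrow>
   x \<in> lev n k j \<Longrightarrow> x \<in> lev n k' j' \<Longrightarrow> k = k' \<and> j = j'"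
  using CKR[of n] unfolding CKR_partition_def by blast
lemma lv_cover: "\<exists>k j. k \<in> {1..C n} \<and> j < h n k \<and> x \<in> lev n k j"
proof -
  have "x \<in> (\<Union>k\<in>{1..C n}. \<Union>j<h n k. lev n k j)" using CKR[of n] unfolding CKR_partition_def by auto
  then show ?thesis by blast
qed

definition Atm :: "nat \<Rightarrow> (nat \<times> nat) set" where "Atm n = (SIGMA k:{1..C n}. {..<h n k})"

lemma finite_Atm: "finite (Atm n)" unfolding Atm_def by auto

definition atm :: "nat \<Rightarrow> 'a \<Rightarrow> nat \<times> nat" where
  "atm n x = (SOME p. p \<in> Atm n \<and> x \<in> lev n (fst p) (snd p))"

lemma atm_prop: "atm n x \<in> Atm n \<and> x \<in> lev n (fst (atm n x)) (snd (atm n x))"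
proof -
  obtain k j where "k \<in> {1..C n} \<and> j < h n k \<and> x \<in> lev n k j" using lv_cover by blast
  then have "\<exists>p. p \<in> Atm n \<and> x \<in> lev n (fst p) (snd p)" unfolding Atm_def by (intro exI[of _ "(k,j)"]) auto
  then show ?thesis unfolding atm_def by (rule someI_ex)
qed

lemma atm_eq: "(k, q) \<in> Atm n \<Longrightarrow> x \<in> lev n k q \<Longrightarrow> atm n x = (k, q)"
  using atm_prop[of n x] lv_disj[of "fst (atm n x)" n k "snd (atm n x)" q x] unfolding Atm_def
  by (cases "atm n x") auto

lemma atm_iff: "(k, q) \<in> Atm n \<Longrightarrow> x \<in> lev n k q \<longleftrightarrow> atm n x = (k, q)"
  using atm_eq atm_prop[of n x] by auto

lemma Atm_iff: "(k,q) \<in> Atm n \<longleftrightarrow> k \<in> {1..C n} \<and> q < h n k" unfolding Atm_def by auto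

lemma lv_apply: "x \<in> lev n k q \<longleftrightarrow> (T ^^ q) x \<in> B n k" unfolding tlevel_def by auto

lemma lv_shift: "i \<le> q \<Longrightarrow> x \<in> lev n k q \<Longrightarrow> (T ^^ i) x \<in> lev n k (q - i)"
proof -
  assume "i \<le> q" "x \<in> lev n k q"
  then have "(T ^^ (q - i)) ((T ^^ i) x) = (T ^^ q) x"
    by (metis funpow_add le_add_diff_inverse2 o_apply)
  then show ?thesis using \<open>x \<in> lev n k q\<close> by (simp add: lv_apply)
qed

definition knd where "knd n x = fst (atm n x)"
definition lvl where "lvl n x = snd (atm n x)"

lemma atm_split: "atm n x = (knd n x, lvl n x)" unfolding knd_def lvl_def by simp
lemma knd_range: "knd n x \<in> {1..C n}" using atm_prop[of n x] unfolding knd_def Atm_def by auto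
lemma lvl_range: "lvl n x < h n (knd n x)" using atm_prop[of n x] unfolding knd_def lvl_def Atm_def by auto
lemma atm_mem: "x \<in> lev n (knd n x) (lvl n x)" using atm_prop[of n x] unfolding knd_def lvl_def by auto

lemma shift_atm: "i \<le> lvl n x \<Longrightarrow> atm n ((T ^^ i) x) = (knd n x, lvl n x - i)"
proof (rule atm_eq)
  assume i: "i \<le> lvl n x"
  show "(knd n x, lvl n x - i) \<in> Atm n" using knd_range[of n x] lvl_range[of n x] by (auto simp: Atm_iff)
  show "(T ^^ i) x \<in> lev n (knd n x) (lvl n x - i)" using lv_shift[OF i atm_mem] .
qed

lemma B_iff: "k \<in> {1..C n} \<Longrightarrow> x \<in> B n k \<longleftrightarrow> atm n x = (k, 0)"
  using atm_iff[of k 0 n x] h_pos[of k n] by (auto simp: Atm_iff tlevel_def)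

lemma roof_iff: "x \<in> roof C B n \<longleftrightarrow> lvl n x = 0"
proof
  assume "x \<in> roof C B n"
  then obtain k where "k \<in> {1..C n}" "x \<in> B n k" unfolding roof_def by auto
  then show "lvl n x = 0" using B_iff atm_split by auto
next
  assume "lvl n x = 0"
  then have "x \<in> B n (knd n x)" using atm_mem[of x n] by (simp add: tlevel_def)
  then show "x \<in> roof C B n" using knd_range unfolding roof_def by auto
qed

lemma return_time_lvl: "return_time T C B n x = lvl n x"
  unfolding return_time_def
proof (rule Least_equality)
  show "(T ^^ lvl n x) x \<in> roof C B n" using shift_atm[of "lvl n x" n x] roof_iff atm_split by auto
next
  fix y assume "(T ^^ y) x \<in> roof C B n"
  then have "lvl n ((T ^^ y) x) = 0" using roof_iff by auto
  then show "lvl n x \<le> y" using shift_atm[of y n x] atm_split by (cases "y \<le> lvl n x") auto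
qed

end

context KRsys begin

lemma KR2: "A \<in> atoms T C h B (Suc n) \<Longrightarrow> \<exists>A'\<in>atoms T C h B n. A \<subseteq> A'"
  using KR unfolding KR_sequence_def by blast

lemma refine1: "atm (Suc n) x = atm (Suc n) y \<Longrightarrow> atm n x = atm n y"
proof -
  assume e: "atm (Suc n) x = atm (Suc n) y"
  let ?A = "lev (Suc n) (knd (Suc n) x) (lvl (Suc n) x)"
  have "?A \<in> atoms T C h B (Suc n)" unfolding atoms_def using knd_range lvl_range by blast
  then obtain A' where A': "A' \<in> atoms T C h B n" "?A \<subseteq> A'" using KR2 by blast
  then obtain k j where kj: "k \<in> {1..C n}" "j < h n k" "A' = lev n k j" unfolding atoms_def by blast
  have "x \<in> ?A" by (rule atm_mem)
  moreover have "y \<in> ?A" using atm_mem[of y "Suc n"] e unfolding knd_def lvl_def by simp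
  ultimately have "x \<in> lev n k j" "y \<in> lev n k j" using A' kj by auto
  moreover have "(k,j) \<in> Atm n" using kj by (simp add: Atm_iff)
  ultimately show ?thesis using atm_eq by metis
qed

lemma refine: "m \<le> n \<Longrightarrow> atm n x = atm n y \<Longrightarrow> atm m x = atm m y"
proof (induction n rule: dec_induct)
  case base then show ?case by simp
next
  case (step n) then show ?case using refine1 by blast
qed

lemma roof_mono1: "roof C B (Suc n) \<subseteq> roof C B n" using KR unfolding KR_sequence_def by blast
lemma roof_mono: "m \<le> n \<Longrightarrow> roof C B n \<subseteq> roof C B m"
proof (induction n rule: dec_induct)
  case base then show ?case by simp
next
  case (step n) then show ?case using roof_mono1[of n] by blast
qed

lemma lvl_mono: "m \<le> n \<Longrightarrow> lvl m x \<le> lvl n x"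
proof -
  assume "m \<le> n"
  have "(T ^^ lvl n x) x \<in> roof C B n" using shift_atm[of "lvl n x" n x] roof_iff atm_split by auto
  then have "(T ^^ lvl n x) x \<in> roof C B m" using roof_mono[OF \<open>m \<le> n\<close>] by auto
  then show ?thesis using return_time_lvl[of m x] unfolding return_time_def by (metis Least_le)
qed

lemma T_inv: "T (inv T y) = y" using bijT by (simp add: bij_is_surj surj_f_inv_f)

lemma Tpow_inv: "(T ^^ q) ((inv T ^^ q) y) = y"
proof (induction q arbitrary: y)
  case 0 then show ?case by simp
next
  case (Suc q)
  have 1: "(inv T ^^ Suc q) y = inv T ((inv T ^^ q) y)" by simp
  have 2: "(T ^^ Suc q) z = (T ^^ q) (T z)" for z by (simp add: funpow_Suc_right del: funpow.simps)
  have "(T ^^ Suc q) ((inv T ^^ Suc q) y) = (T ^^ q) (T ((inv T) ((inv T ^^ q) y)))"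
    unfolding 1 2 ..
  also have "\<dots> = y" using Suc T_inv by simp
  finally show ?case .
qed

definition rep :: "nat \<Rightarrow> nat \<times> nat \<Rightarrow> 'a" where
  "rep n p = (inv T ^^ snd p) (SOME b. b \<in> B n (fst p))"

lemma rep_atm: "p \<in> Atm n \<Longrightarrow> atm n (rep n p) = p"
proof -
  assume p: "p \<in> Atm n"
  obtain k q where pk: "p = (k,q)" by (cases p)
  have k: "k \<in> {1..C n}" using p pk by (auto simp: Atm_iff)
  have "(SOME b. b \<in> B n k) \<in> B n k" using B_ne[OF k] by (simp add: some_in_eq)
  then have "rep n p \<in> lev n k q" unfolding rep_def pk tlevel_def using Tpow_inv by simp
  then show ?thesis using atm_eq p pk by simp
qed

definition atomic :: "nat \<Rightarrow> ('a \<Rightarrow> 'b) \<Rightarrow> bool" where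
  "atomic n f \<longleftrightarrow> (\<forall>x y. atm n x = atm n y \<longrightarrow> f x = f y)"

lemma atomicI: "(\<And>x y. atm n x = atm n y \<Longrightarrow> f x = f y) \<Longrightarrow> atomic n f" unfolding atomic_def by blast

lemma atomic_mono: "m \<le> n \<Longrightarrow> atomic m f \<Longrightarrow> atomic n f"
  unfolding atomic_def using refine by blast

lemma atomic_rep: "atomic n f \<Longrightarrow> f (rep n (atm n x)) = f x"
  unfolding atomic_def using rep_atm atm_prop by blast

lemma atomic_const: "atomic n (\<lambda>x. c)" unfolding atomic_def by simp

lemma atomic_comp: "atomic n f \<Longrightarrow> atomic n (\<lambda>x. g (f x))" unfolding atomic_def by metis
lemma atomic_comp2: "atomic n f \<Longrightarrow> atomic n g \<Longrightarrow> atomic n (\<lambda>x. k (f x) (g x))" unfolding atomic_def by metis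

lemma sets_mu: "sets \<mu> = sets borel" using inv_mu unfolding invariant_prob_def by auto
lemma mu_prob: "prob_space \<mu>" using inv_mu unfolding invariant_prob_def by auto
lemma T_meas: "T \<in> measurable \<mu> \<mu>" using inv_mu unfolding invariant_prob_def by auto
lemma distr_T: "distr \<mu> \<mu> T = \<mu>" using inv_mu unfolding invariant_prob_def by auto

lemma Tpow_cont: "continuous (at x) (T ^^ q)"
proof (induction q arbitrary: x)
  case 0 then show ?case by (simp add: id_def)
next
  case (Suc q)
  have cT: "continuous (at y) T" for y using contT by (simp add: continuous_on_eq_continuous_at)
  show ?case unfolding funpow.simps by (rule continuous_at_compose[OF Suc cT])
qed

lemma lev_open: "k \<in> {1..C n} \<Longrightarrow> open (lev n k q)"
  unfolding tlevel_def by (rule continuous_open_vimage[OF B_open Tpow_cont])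

lemma lev_sets: "k \<in> {1..C n} \<Longrightarrow> lev n k q \<in> sets \<mu>"
  using lev_open sets_mu by auto

lemma B_sets: "k \<in> {1..C n} \<Longrightarrow> B n k \<in> sets \<mu>"
  using B_open sets_mu by auto

lemma atomic_sum: "atomic n (f :: 'a \<Rightarrow> real) \<Longrightarrow> f x = (\<Sum>p\<in>Atm n. f (rep n p) * indicator (lev n (fst p) (snd p)) x)"
proof -
  assume a: "atomic n f"
  have "(\<Sum>p\<in>Atm n. f (rep n p) * indicator (lev n (fst p) (snd p)) x)
      = (\<Sum>p\<in>Atm n. if p = atm n x then f x else 0)"
  proof (rule sum.cong)
    fix p assume p: "p \<in> Atm n"
    have "x \<in> lev n (fst p) (snd p) \<longleftrightarrow> p = atm n x" using atm_iff[of "fst p" "snd p" n x] p by auto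
    then show "f (rep n p) * indicator (lev n (fst p) (snd p)) x = (if p = atm n x then f x else 0)"
      using atomic_rep[OF a, of x] by (cases "p = atm n x") (simp_all add: indicator_def)
  qed simp
  also have "\<dots> = f x" using atm_prop[of n x] finite_Atm[of n] by (simp add: sum.delta')
  finally show ?thesis by simp
qed

lemma atomic_meas: "atomic n (f :: 'a \<Rightarrow> real) \<Longrightarrow> f \<in> borel_measurable \<mu>"
proof -
  assume a: "atomic n f"
  have "(\<lambda>x. \<Sum>p\<in>Atm n. f (rep n p) * indicator (lev n (fst p) (snd p)) x) \<in> borel_measurable \<mu>"
  proof (rule borel_measurable_sum)
    fix p assume "p \<in> Atm n"
    then have [measurable]: "lev n (fst p) (snd p) \<in> sets \<mu>" using lev_sets by (cases p) (auto simp: Atm_iff)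
    show "(\<lambda>x. f (rep n p) * indicator (lev n (fst p) (snd p)) x) \<in> borel_measurable \<mu>" by measurable
  qed
  moreover have "f = (\<lambda>x. \<Sum>p\<in>Atm n. f (rep n p) * indicator (lev n (fst p) (snd p)) x)"
    using atomic_sum[OF a] by (rule ext)
  ultimately show ?thesis by (simp only:)
qed

lemma atomic_bdd: "atomic n (f :: 'a \<Rightarrow> real) \<Longrightarrow> \<exists>c. \<forall>x. \<bar>f x\<bar> \<le> c"
proof -
  assume a: "atomic n f"
  have "\<bar>f x\<bar> \<le> (\<Sum>p\<in>Atm n. \<bar>f (rep n p)\<bar>)" for x
  proof -
    have "\<bar>f x\<bar> = \<bar>f (rep n (atm n x))\<bar>" using atomic_rep[OF a, of x] by simp
    also have "\<dots> \<le> (\<Sum>p\<in>Atm n. \<bar>f (rep n p)\<bar>)"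
      by (rule member_le_sum) (use atm_prop finite_Atm in auto)
    finally show ?thesis .
  qed
  then show ?thesis by blast
qed

lemma atomic_int: "atomic n (f :: 'a \<Rightarrow> real) \<Longrightarrow> integrable \<mu> f"
proof -
  assume a: "atomic n f"
  then obtain c where "\<forall>x. \<bar>f x\<bar> \<le> c" using atomic_bdd by blast
  then have "AE x in \<mu>. norm (f x) \<le> c" by simp
  then show ?thesis using finite_measure.integrable_const_bound[OF prob_space.finite_measure[OF mu_prob], of f c] atomic_meas[OF a]
    by blast
qed

end

context KRsys begin

lemma bint: "f \<in> borel_measurable \<mu> \<Longrightarrow> (\<And>x. \<bar>f x\<bar> \<le> c) \<Longrightarrow> integrable \<mu> (f :: 'a \<Rightarrow> real)"
proof -
  assume m: "f \<in> borel_measurable \<mu>" and b: "\<And>x. \<bar>f x\<bar> \<le> c"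
  have "AE x in \<mu>. norm (f x) \<le> c" using b by (intro AE_I2) simp
  then show ?thesis using finite_measure.integrable_const_bound[OF prob_space.finite_measure[OF mu_prob], of f c] m
    by blast
qed

lemma Tpow_meas: "(T ^^ q) \<in> measurable \<mu> \<mu>"
proof (induction q)
  case 0 then show ?case by simp
next
  case (Suc q) show ?case unfolding funpow.simps by (rule measurable_comp[OF Suc T_meas])
qed

lemma invar: "(f :: 'a \<Rightarrow> real) \<in> borel_measurable \<mu> \<Longrightarrow> (\<integral>x. f ((T ^^ q) x) \<partial>\<mu>) = (\<integral>x. f x \<partial>\<mu>)"
proof (induction q)
  case 0 then show ?case by simp
next
  case (Suc q)
  have m: "(\<lambda>x. f ((T ^^ q) x)) \<in> borel_measurable \<mu>" by (rule measurable_compose[OF Tpow_meas Suc.prems])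
  have "(\<integral>x. f ((T ^^ Suc q) x) \<partial>\<mu>) = (\<integral>x. (\<lambda>y. f ((T ^^ q) y)) (T x) \<partial>\<mu>)"
    by (simp add: funpow_Suc_right del: funpow.simps)
  also have "\<dots> = integral\<^sup>L (distr \<mu> \<mu> T) (\<lambda>y. f ((T ^^ q) y))"
    by (rule integral_distr[OF T_meas m, symmetric])
  also have "\<dots> = (\<integral>x. f x \<partial>\<mu>)" using distr_T Suc by simp
  finally show ?case .
qed

lemma DF:
  assumes a: "atomic n (a :: 'a \<Rightarrow> real)" and bm: "b \<in> borel_measurable \<mu>" and bb: "\<And>x. \<bar>b x\<bar> \<le> c"
    and bs: "\<And>x. b ((T ^^ lvl n x) x) = b x"
  shows "(\<integral>x. a x * b x \<partial>\<mu>) = (\<Sum>p\<in>Atm n. a (rep n p) * (\<integral>x. indicator (B n (fst p)) x * b x \<partial>\<mu>))"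
proof -
  have im: "(\<lambda>x. indicator (lev n (fst p) (snd p)) x * b x) \<in> borel_measurable \<mu>" if "p \<in> Atm n" for p
  proof -
    have l: "lev n (fst p) (snd p) \<in> sets \<mu>" using lev_sets that by (cases p) (auto simp: Atm_iff)
    show ?thesis by (rule borel_measurable_times[OF borel_measurable_indicator[OF l] bm])
  qed
  have c0: "0 \<le> c" using bb[of undefined] by linarith
  have ii: "integrable \<mu> (\<lambda>x. indicator (lev n (fst p) (snd p)) x * b x)" if "p \<in> Atm n" for p
    by (rule bint[OF im[OF that], of c]) (use bb c0 in \<open>simp add: indicator_def\<close>)
  have "(\<integral>x. a x * b x \<partial>\<mu>) = (\<integral>x. (\<Sum>p\<in>Atm n. a (rep n p) * (indicator (lev n (fst p) (snd p)) x * b x)) \<partial>\<mu>)"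
  proof (rule Bochner_Integration.integral_cong[OF refl])
    fix x
    have e: "a x = (\<Sum>p\<in>Atm n. a (rep n p) * indicator (lev n (fst p) (snd p)) x)"
      by (rule atomic_sum[OF a])
    show "a x * b x = (\<Sum>p\<in>Atm n. a (rep n p) * (indicator (lev n (fst p) (snd p)) x * b x))"
      by (subst e) (simp add: sum_distrib_right mult.assoc)
  qed
  also have "\<dots> = (\<Sum>p\<in>Atm n. a (rep n p) * (\<integral>x. indicator (lev n (fst p) (snd p)) x * b x \<partial>\<mu>))"
    using ii by (simp add: Bochner_Integration.integral_sum)
  also have "\<dots> = (\<Sum>p\<in>Atm n. a (rep n p) * (\<integral>x. indicator (B n (fst p)) x * b x \<partial>\<mu>))"
  proof (rule sum.cong[OF refl])
    fix p assume p: "p \<in> Atm n"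
    obtain k q where pk: "p = (k,q)" by (cases p)
    have k: "k \<in> {1..C n}" using p pk by (auto simp: Atm_iff)
    have [measurable]: "B n k \<in> sets \<mu>" using B_sets[OF k] .
    have "(\<integral>x. indicator (lev n k q) x * b x \<partial>\<mu>) = (\<integral>x. (\<lambda>y. indicator (B n k) y * b y) ((T ^^ q) x) \<partial>\<mu>)"
    proof (rule Bochner_Integration.integral_cong[OF refl])
      fix x
      show "indicator (lev n k q) x * b x = indicator (B n k) ((T ^^ q) x) * b ((T ^^ q) x)"
      proof (cases "x \<in> lev n k q")
        case True
        then have "lvl n x = q" using atm_eq[of k q n x] p pk atm_split by auto
        then show ?thesis using True bs[of x] by (simp add: tlevel_def)
      next
        case False then show ?thesis by (simp add: tlevel_def)
      qed
    qed
    also have "\<dots> = (\<integral>x. indicator (B n k) x * b x \<partial>\<mu>)"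
      by (rule invar, rule borel_measurable_times[OF borel_measurable_indicator[OF B_sets[OF k]] bm])
    finally show "a (rep n p) * (\<integral>x. indicator (lev n (fst p) (snd p)) x * b x \<partial>\<mu>) =
         a (rep n p) * (\<integral>x. indicator (B n (fst p)) x * b x \<partial>\<mu>)" using pk by simp
  qed
  finally show ?thesis .
qed

end

context KRsys begin

lemma KRs_alt: "KR_s T C B j t x = card {k. lvl j x < k \<and> k \<le> lvl (Suc j) x \<and> (T ^^ k) x \<in> B j t}"
  unfolding KR_s_def return_time_lvl ..

lemma KRs_atomic: "t \<in> {1..C j} \<Longrightarrow> atomic (Suc j) (\<lambda>x. KR_s T C B j t x)"
proof (rule atomicI)
  fix x y assume t: "t \<in> {1..C j}" and e: "atm (Suc j) x = atm (Suc j) y"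
  have lj: "lvl j x = lvl j y" using refine1[OF e] unfolding lvl_def by simp
  have lS: "lvl (Suc j) x = lvl (Suc j) y" "knd (Suc j) x = knd (Suc j) y" using e unfolding lvl_def knd_def by simp_all
  have "(T ^^ k) x \<in> B j t \<longleftrightarrow> (T ^^ k) y \<in> B j t" if k: "k \<le> lvl (Suc j) x" for k
  proof -
    have "atm (Suc j) ((T ^^ k) x) = atm (Suc j) ((T ^^ k) y)"
      using shift_atm[OF k] shift_atm[of k "Suc j" y] k lS by simp
    then have "atm j ((T ^^ k) x) = atm j ((T ^^ k) y)" by (rule refine1)
    then show ?thesis using B_iff[OF t] by simp
  qed
  then have "{k. lvl j x < k \<and> k \<le> lvl (Suc j) x \<and> (T ^^ k) x \<in> B j t}
      = {k. lvl j y < k \<and> k \<le> lvl (Suc j) y \<and> (T ^^ k) y \<in> B j t}" using lj lS by auto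
  then show "KR_s T C B j t x = KR_s T C B j t y" unfolding KRs_alt by simp
qed

lemma KRs_shift: "KR_s T C B j t ((T ^^ lvl j x) x) = KR_s T C B j t x"
proof -
  let ?q = "lvl j x"
  let ?y = "(T ^^ ?q) x"
  have q: "?q \<le> lvl (Suc j) x" by (rule lvl_mono) simp
  have ly: "lvl j ?y = 0" using shift_atm[of ?q j x] atm_split by simp
  have lSy: "lvl (Suc j) ?y = lvl (Suc j) x - ?q" using shift_atm[OF q] atm_split by simp
  have fa: "(T ^^ k) ?y = (T ^^ (k + ?q)) x" for k by (simp add: funpow_add)
  have "{k. ?q < k \<and> k \<le> lvl (Suc j) x \<and> (T ^^ k) x \<in> B j t}
      = (\<lambda>k. k + ?q) ` {k. 0 < k \<and> k \<le> lvl (Suc j) x - ?q \<and> (T ^^ k) ?y \<in> B j t}"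
  proof (rule set_eqI)
    fix k
    show "k \<in> {k. ?q < k \<and> k \<le> lvl (Suc j) x \<and> (T ^^ k) x \<in> B j t} \<longleftrightarrow>
      k \<in> (\<lambda>k. k + ?q) ` {k. 0 < k \<and> k \<le> lvl (Suc j) x - ?q \<and> (T ^^ k) ?y \<in> B j t}"
    proof
      assume k: "k \<in> {k. ?q < k \<and> k \<le> lvl (Suc j) x \<and> (T ^^ k) x \<in> B j t}"
      then have "k - ?q \<in> {k. 0 < k \<and> k \<le> lvl (Suc j) x - ?q \<and> (T ^^ k) ?y \<in> B j t}"
        using fa[of "k - ?q"] by auto
      moreover have "k = (k - ?q) + ?q" using k by auto
      ultimately show "k \<in> (\<lambda>k. k + ?q) ` {k. 0 < k \<and> k \<le> lvl (Suc j) x - ?q \<and> (T ^^ k) ?y \<in> B j t}"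
        by blast
    next
      assume "k \<in> (\<lambda>k. k + ?q) ` {k. 0 < k \<and> k \<le> lvl (Suc j) x - ?q \<and> (T ^^ k) ?y \<in> B j t}"
      then obtain k' where "k = k' + ?q" "0 < k'" "k' \<le> lvl (Suc j) x - ?q" "(T ^^ k') ?y \<in> B j t" by blast
      then show "k \<in> {k. ?q < k \<and> k \<le> lvl (Suc j) x \<and> (T ^^ k) x \<in> B j t}" using fa[of k'] q by auto
    qed
  qed
  then have "card {k. ?q < k \<and> k \<le> lvl (Suc j) x \<and> (T ^^ k) x \<in> B j t}
      = card {k. 0 < k \<and> k \<le> lvl (Suc j) x - ?q \<and> (T ^^ k) ?y \<in> B j t}"
    by (simp add: card_image inj_on_def)
  then show ?thesis unfolding KRs_alt ly lSy by simp
qed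

definition MS :: "nat \<Rightarrow> nat \<Rightarrow> nat \<Rightarrow> nat set" where
  "MS j l t = {Q. Q < h (Suc j) l \<and> lev (Suc j) l Q \<subseteq> B j t}"

lemma KRM_MS: "KR_M T h B (Suc j) l t = card (MS j l t)" unfolding KR_M_def MS_def by simp

lemma finite_MS: "finite (MS j l t)" unfolding MS_def by auto

lemma KRs_le_M: "t \<in> {1..C j} \<Longrightarrow> KR_s T C B j t x \<le> card (MS j (knd (Suc j) x) t)"
proof -
  assume t: "t \<in> {1..C j}"
  let ?R = "lvl (Suc j) x" and ?l = "knd (Suc j) x"
  let ?S = "{k. lvl j x < k \<and> k \<le> ?R \<and> (T ^^ k) x \<in> B j t}"
  have "inj_on (\<lambda>k. ?R - k) ?S" by (auto simp: inj_on_def)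
  moreover have "(\<lambda>k. ?R - k) ` ?S \<subseteq> MS j ?l t"
  proof
    fix Q assume "Q \<in> (\<lambda>k. ?R - k) ` ?S"
    then obtain k where k: "k \<in> ?S" "Q = ?R - k" by blast
    have Qr: "Q < h (Suc j) ?l" using k lvl_range[of "Suc j" x] by auto
    have inA: "(?l, Q) \<in> Atm (Suc j)" using Qr knd_range by (auto simp: Atm_iff)
    have a1: "atm (Suc j) ((T ^^ k) x) = (?l, Q)" using shift_atm[of k "Suc j" x] k by auto
    have a2: "atm j ((T ^^ k) x) = (t, 0)" using k B_iff[OF t] by auto
    have "lev (Suc j) ?l Q \<subseteq> B j t"
    proof
      fix y assume "y \<in> lev (Suc j) ?l Q"
      then have "atm (Suc j) y = (?l, Q)" using atm_eq[OF inA] by simp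
      then have "atm j y = atm j ((T ^^ k) x)" using a1 refine1 by metis
      then show "y \<in> B j t" using a2 B_iff[OF t] by simp
    qed
    then show "Q \<in> MS j ?l t" unfolding MS_def using Qr by simp
  qed
  ultimately show ?thesis unfolding KRs_alt using card_inj_on_le finite_MS by blast
qed

lemma block_le: assumes l: "l \<in> {1..C (Suc j)}"
  shows "(\<Sum>t\<in>{1..C j}. card (MS j l t) * h j t) \<le> h (Suc j) l"
proof -
  define pt where "pt = (\<lambda>(t::nat, Q, q). (inv T ^^ q) (rep (Suc j) (l, Q)))"
  define S where "S = (SIGMA t:{1..C j}. MS j l t \<times> {..<h j t})"
  have key: "atm j (pt (t,Q,q)) = (t, q) \<and> atm (Suc j) (pt (t,Q,q)) = (l, Q + q)" if "(t,Q,q) \<in> S" for t Q q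
  proof -
    from that have t: "t \<in> {1..C j}" and Q: "Q \<in> MS j l t" and q: "q < h j t" unfolding S_def by auto
    have QA: "(l, Q) \<in> Atm (Suc j)" using Q l unfolding MS_def by (auto simp: Atm_iff)
    have r: "rep (Suc j) (l, Q) \<in> lev (Suc j) l Q" using rep_atm[OF QA] atm_mem[of "rep (Suc j) (l, Q)" "Suc j"]
      by (simp add: knd_def lvl_def)
    have rB: "rep (Suc j) (l, Q) \<in> B j t" using r Q unfolding MS_def by auto
    let ?x = "pt (t,Q,q)"
    have Tq: "(T ^^ q) ?x = rep (Suc j) (l, Q)" unfolding pt_def using Tpow_inv by simp
    have "?x \<in> lev j t q" using Tq rB by (simp add: tlevel_def)
    then have aj: "atm j ?x = (t, q)" using atm_eq t q by (simp add: Atm_iff)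
    have qle: "q \<le> lvl (Suc j) ?x" using lvl_mono[of j "Suc j" ?x] aj atm_split by auto
    have "atm (Suc j) ((T ^^ q) ?x) = (l, Q)" using Tq rep_atm[OF QA] by simp
    then have "(knd (Suc j) ?x, lvl (Suc j) ?x - q) = (l, Q)" using shift_atm[OF qle] by simp
    then have "atm (Suc j) ?x = (l, Q + q)" using qle atm_split by auto
    then show ?thesis using aj by simp
  qed
  have inj: "inj_on (\<lambda>(t, Q, q). Q + q) S"
  proof (rule inj_onI)
    fix a b assume a: "a \<in> S" and b: "b \<in> S" and e: "(\<lambda>(t, Q, q). Q + q) a = (\<lambda>(t, Q, q). Q + q) b"
    obtain t Q q where ta: "a = (t,Q,q)" by (cases a) auto
    obtain t' Q' q' where tb: "b = (t',Q',q')" by (cases b) auto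
    have "atm (Suc j) (pt a) = atm (Suc j) (pt b)" using key a b e ta tb by auto
    then have "atm j (pt a) = atm j (pt b)" by (rule refine1)
    then have "t = t' \<and> q = q'" using key a b ta tb by auto
    then show "a = b" using e ta tb by auto
  qed
  have sub: "(\<lambda>(t, Q, q). Q + q) ` S \<subseteq> {..<h (Suc j) l}"
  proof
    fix z assume "z \<in> (\<lambda>(t, Q, q). Q + q) ` S"
    then obtain t Q q where a: "(t,Q,q) \<in> S" "z = Q + q" by auto
    have "atm (Suc j) (pt (t,Q,q)) = (l, Q + q)" using key[OF a(1)] by simp
    then show "z \<in> {..<h (Suc j) l}" using a lvl_range[of "Suc j" "pt (t,Q,q)"] atm_split by auto
  qed
  have fin: "finite S" unfolding S_def using finite_MS by auto
  have "card S = (\<Sum>t\<in>{1..C j}. card (MS j l t) * h j t)"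
    unfolding S_def using finite_MS by (simp add: card_SigmaI card_cartesian_product)
  moreover have "card S \<le> h (Suc j) l"
    using card_inj_on_le[OF inj sub] by simp
  ultimately show ?thesis by simp
qed

lemma sumM_le_L: assumes l: "l \<in> {1..C (Suc j)}" and j: "j \<ge> 1"
  shows "(\<Sum>t\<in>{1..C j}. real (card (MS j l t))) \<le> L"
proof -
  have ne: "h j ` {1..C j} \<noteq> {}" using C_pos[of j] by auto
  have "Min (h j ` {1..C j}) \<in> h j ` {1..C j}" by (rule Min_in) (use ne in auto)
  then obtain t0 where t0: "t0 \<in> {1..C j}" "h j t0 = Min (h j ` {1..C j})" by auto
  have mn: "h j t0 \<le> h j t" if "t \<in> {1..C j}" for t using t0 that by simp
  have h0: "real (h j t0) \<ge> 1" using h_pos[OF t0(1)] by simp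
  have "(\<Sum>t\<in>{1..C j}. real (card (MS j l t))) * real (h j t0) = (\<Sum>t\<in>{1..C j}. real (card (MS j l t)) * real (h j t0))"
    by (simp add: sum_distrib_right)
  also have "\<dots> \<le> (\<Sum>t\<in>{1..C j}. real (card (MS j l t)) * real (h j t))"
    by (rule sum_mono) (use mn in \<open>simp add: mult_left_mono\<close>)
  also have "\<dots> = real (\<Sum>t\<in>{1..C j}. card (MS j l t) * h j t)" by simp
  also have "\<dots> \<le> real (h (Suc j) l)" using block_le[OF l] by linarith
  also have "\<dots> \<le> L * real (h j t0)" using LR[of "Suc j" l t0] l t0 by simp
  finally show ?thesis using h0 by (simp add: mult_le_cancel_right)
qed

definition pn :: "(nat \<Rightarrow> real) \<Rightarrow> nat \<Rightarrow> real" where "pn v j = KR_Pv_norm T C h B v j"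

lemma Pv_le: "t \<in> {1..C j} \<Longrightarrow> \<bar>KR_Pv T C h B v j t\<bar> \<le> pn v j"
  unfolding pn_def KR_Pv_norm_def by (rule Max_ge) auto

lemma pn_nonneg: "pn v j \<ge> 0"
  using Pv_le[of 1 j v] C_pos[of j] by (meson abs_ge_zero atLeastAtMost_iff order_trans order_refl)

definition dd :: "(nat \<Rightarrow> real) \<Rightarrow> nat \<Rightarrow> 'a \<Rightarrow> real" where
  "dd v j x = (\<Sum>t\<in>{1..C j}. real (KR_s T C B j t x) * KR_Pv T C h B v j t)"

lemma g_dd: "KR_g T C h B v n x = (\<Sum>j\<in>{1..<n}. dd v j x)" unfolding KR_g_def dd_def ..

lemma dd_atomic: "atomic (Suc j) (dd v j)"
proof -
  have "atomic (Suc j) (\<lambda>x. real (KR_s T C B j t x) * KR_Pv T C h B v j t)" if "t \<in> {1..C j}" for t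
    using KRs_atomic[OF that] unfolding atomic_def by metis
  then show ?thesis unfolding atomic_def dd_def by (metis (mono_tags, lifting) sum.cong)
qed

lemma dd_shift: "dd v j ((T ^^ lvl j x) x) = dd v j x" unfolding dd_def KRs_shift ..

lemma dd_bound: "j \<ge> 1 \<Longrightarrow> \<bar>dd v j x\<bar> \<le> L * pn v j"
proof -
  assume j: "j \<ge> 1"
  have "\<bar>dd v j x\<bar> \<le> (\<Sum>t\<in>{1..C j}. \<bar>real (KR_s T C B j t x) * KR_Pv T C h B v j t\<bar>)"
    unfolding dd_def by (rule sum_abs)
  also have "\<dots> \<le> (\<Sum>t\<in>{1..C j}. real (card (MS j (knd (Suc j) x) t)) * pn v j)"
  proof (rule sum_mono)
    fix t assume t: "t \<in> {1..C j}"
    have "\<bar>real (KR_s T C B j t x) * KR_Pv T C h B v j t\<bar> = real (KR_s T C B j t x) * \<bar>KR_Pv T C h B v j t\<bar>"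
      by (simp add: abs_mult)
    also have "\<dots> \<le> real (card (MS j (knd (Suc j) x) t)) * pn v j"
      using KRs_le_M[OF t, of x] Pv_le[OF t, of v] pn_nonneg
      by (intro mult_mono) auto
    finally show "\<bar>real (KR_s T C B j t x) * KR_Pv T C h B v j t\<bar> \<le> real (card (MS j (knd (Suc j) x) t)) * pn v j" .
  qed
  also have "\<dots> = (\<Sum>t\<in>{1..C j}. real (card (MS j (knd (Suc j) x) t))) * pn v j" by (simp add: sum_distrib_right)
  also have "\<dots> \<le> L * pn v j" using sumM_le_L[OF knd_range j] pn_nonneg by (intro mult_right_mono) auto
  finally show ?thesis .
qed

end

context KRsys begin

definition AA :: "('a \<Rightarrow> real) \<Rightarrow> nat \<Rightarrow> nat \<Rightarrow> real" where
  "AA a j t = (\<Sum>q<h j t. a (rep j (t, q)))"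

definition mm :: "nat \<Rightarrow> nat \<Rightarrow> real" where
  "mm j t = (\<integral>x. indicator (B j t) x \<partial>\<mu>)"

lemma sum_Atm: "(\<Sum>p\<in>Atm n. g p) = (\<Sum>t\<in>{1..C n}. \<Sum>q<h n t. g (t,q))"
proof -
  have "(\<Sum>t\<in>{1..C n}. \<Sum>q<h n t. g (t,q)) = (\<Sum>(t,q)\<in>Atm n. g (t,q))"
    unfolding Atm_def by (rule sum.Sigma) auto
  then show ?thesis by (simp add: case_prod_beta')
qed

lemma DF2:
  assumes a: "atomic n (a :: 'a \<Rightarrow> real)" and bm: "b \<in> borel_measurable \<mu>" and bb: "\<And>x. \<bar>b x\<bar> \<le> c"
    and bs: "\<And>x. b ((T ^^ lvl n x) x) = b x"
  shows "(\<integral>x. a x * b x \<partial>\<mu>) = (\<Sum>t\<in>{1..C n}. AA a n t * (\<integral>x. indicator (B n t) x * b x \<partial>\<mu>))"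
proof -
  have "(\<integral>x. a x * b x \<partial>\<mu>) = (\<Sum>p\<in>Atm n. a (rep n p) * (\<integral>x. indicator (B n (fst p)) x * b x \<partial>\<mu>))"
    apply (rule DF[OF a bm bb])
    apply (rule bs)
    done
  also have "\<dots> = (\<Sum>t\<in>{1..C n}. \<Sum>q<h n t. a (rep n (t,q)) * (\<integral>x. indicator (B n t) x * b x \<partial>\<mu>))"
    using sum_Atm[of "\<lambda>p. a (rep n p) * (\<integral>x. indicator (B n (fst p)) x * b x \<partial>\<mu>)" n] by simp
  also have "\<dots> = (\<Sum>t\<in>{1..C n}. AA a n t * (\<integral>x. indicator (B n t) x * b x \<partial>\<mu>))"
    unfolding AA_def by (rule sum.cong[OF refl], rule sum_distrib_right[symmetric])
  finally show ?thesis .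
qed

lemma AA_one: "AA (\<lambda>x. 1) j t = real (h j t)" unfolding AA_def by simp

lemma ind_meas: "k \<in> {1..C n} \<Longrightarrow> (indicator (B n k) :: 'a \<Rightarrow> real) \<in> borel_measurable \<mu>"
  using B_sets by (rule borel_measurable_indicator)

lemma int_one: "(\<integral>x. (1::real) \<partial>\<mu>) = 1"
  using prob_space.prob_space[OF mu_prob] by simp

lemma F2:
  assumes bm: "b \<in> borel_measurable \<mu>" and bb: "\<And>x. \<bar>b x\<bar> \<le> c"
    and bs: "\<And>x. b ((T ^^ lvl n x) x) = b x"
  shows "(\<integral>x. b x \<partial>\<mu>) = (\<Sum>t\<in>{1..C n}. real (h n t) * (\<integral>x. indicator (B n t) x * b x \<partial>\<mu>))"
proof -
  have "(\<integral>x. (\<lambda>x. 1) x * b x \<partial>\<mu>) = (\<Sum>t\<in>{1..C n}. AA (\<lambda>x. 1) n t * (\<integral>x. indicator (B n t) x * b x \<partial>\<mu>))"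
    apply (rule DF2[OF atomic_const bm bb])
    apply (rule bs)
    done
  then show ?thesis by (simp add: AA_one)
qed

lemma F1: "(\<Sum>t\<in>{1..C n}. real (h n t) * mm n t) = 1"
  using F2[of "\<lambda>x. 1" 1 n] int_one unfolding mm_def by simp

lemma mm_nonneg: "mm j t \<ge> 0" unfolding mm_def by simp

lemma F3: "k \<in> {1..C n} \<Longrightarrow> (\<integral>x. indicator (lev n k q) x \<partial>\<mu>) = mm n k"
proof -
  assume k: "k \<in> {1..C n}"
  have "(\<integral>x. indicator (lev n k q) x \<partial>\<mu>) = (\<integral>x. (indicator (B n k) :: 'a \<Rightarrow> real) ((T ^^ q) x) \<partial>\<mu>)"
    by (simp add: tlevel_def indicator_def)
  also have "\<dots> = mm n k" unfolding mm_def by (rule invar[OF ind_meas[OF k]])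
  finally show ?thesis .
qed

definition tw :: "nat \<Rightarrow> nat \<Rightarrow> 'a \<Rightarrow> real" where
  "tw j l x = (if knd (Suc j) x = l then 1 else 0)"

lemma tw_atomic: "atomic (Suc j) (tw j l)" unfolding atomic_def tw_def knd_def by auto
lemma tw_meas: "tw j l \<in> borel_measurable \<mu>" using atomic_meas[OF tw_atomic] .
lemma tw_bdd: "\<bar>tw j l x\<bar> \<le> 1" unfolding tw_def by simp
lemma tw_shift: "tw j l ((T ^^ lvl j x) x) = tw j l x"
proof -
  have "lvl j x \<le> lvl (Suc j) x" by (rule lvl_mono) simp
  then have "atm (Suc j) ((T ^^ lvl j x) x) = (knd (Suc j) x, lvl (Suc j) x - lvl j x)" by (rule shift_atm)
  then show ?thesis unfolding tw_def by (simp add: knd_def)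
qed

definition nu :: "nat \<Rightarrow> nat \<Rightarrow> nat \<Rightarrow> real" where
  "nu j l t = (\<integral>x. indicator (B j t) x * tw j l x \<partial>\<mu>)"

lemma W1: "atomic j a \<Longrightarrow> (\<integral>x. a x * tw j l x \<partial>\<mu>) = (\<Sum>t\<in>{1..C j}. AA a j t * nu j l t)"
  unfolding nu_def
  apply (rule DF2[OF _ tw_meas tw_bdd])
   apply assumption
  apply (rule tw_shift)
  done

lemma W2: assumes a: "atomic j a" and l: "l \<in> {1..C (Suc j)}"
  shows "(\<integral>x. a x * tw j l x \<partial>\<mu>) = AA a (Suc j) l * mm (Suc j) l"
proof -
  have a': "atomic (Suc j) a" using atomic_mono[OF _ a] by simp
  have sh: "tw j l ((T ^^ lvl (Suc j) x) x) = tw j l x" for x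
  proof -
    have "atm (Suc j) ((T ^^ lvl (Suc j) x) x) = (knd (Suc j) x, lvl (Suc j) x - lvl (Suc j) x)" by (rule shift_atm) simp
    then show ?thesis unfolding tw_def by (simp add: knd_def)
  qed
  have "(\<integral>x. a x * tw j l x \<partial>\<mu>) = (\<Sum>l'\<in>{1..C (Suc j)}. AA a (Suc j) l' * (\<integral>x. indicator (B (Suc j) l') x * tw j l x \<partial>\<mu>))"
    apply (rule DF2[OF a' tw_meas tw_bdd])
    apply (rule sh)
    done
  also have "\<dots> = (\<Sum>l'\<in>{1..C (Suc j)}. if l' = l then AA a (Suc j) l * mm (Suc j) l else 0)"
  proof (rule sum.cong[OF refl])
    fix l' assume l': "l' \<in> {1..C (Suc j)}"
    have "indicator (B (Suc j) l') x * tw j l x = (if l' = l then indicator (B (Suc j) l') x else 0)" for x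
    proof (cases "x \<in> B (Suc j) l'")
      case True
      then have "atm (Suc j) x = (l', 0)" using B_iff[OF l'] by simp
      then have "knd (Suc j) x = l'" by (simp add: knd_def)
      then show ?thesis using True unfolding tw_def by auto
    qed (auto simp: indicator_def)
    then show "AA a (Suc j) l' * (\<integral>x. indicator (B (Suc j) l') x * tw j l x \<partial>\<mu>) =
      (if l' = l then AA a (Suc j) l * mm (Suc j) l else 0)" unfolding mm_def by simp
  qed
  also have "\<dots> = AA a (Suc j) l * mm (Suc j) l" using l by (simp add: sum.delta)
  finally show ?thesis .
qed

end

lemma pair_bound:
  fixes w w' a :: "nat \<Rightarrow> real"
  assumes S: "finite S" and w0: "\<forall>t\<in>S. 0 \<le> w t" and w1: "sum w S = 1"
    and we: "\<forall>t\<in>S. e \<le> w' t" and w'1: "sum w' S = 1" and e0: "0 \<le> e"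
    and aR: "\<forall>t\<in>S. \<forall>t'\<in>S. \<bar>a t - a t'\<bar> \<le> R"
  shows "\<bar>(\<Sum>t\<in>S. w t * a t) - (\<Sum>t\<in>S. w' t * a t)\<bar> \<le> (1 - e) * R"
proof -
  have "S \<noteq> {}" using w1 by auto
  then obtain t0 where "t0 \<in> S" by auto
  then have R0: "0 \<le> R" using aR by force
  have w'0: "\<forall>t\<in>S. 0 \<le> w' t" using we e0 by force
  have eq: "(\<Sum>t\<in>S. w t * a t) - (\<Sum>t\<in>S. w' t * a t) = (\<Sum>t\<in>S. \<Sum>t'\<in>S. w t * w' t' * (a t - a t'))"
  proof -
    have "(\<Sum>t\<in>S. \<Sum>t'\<in>S. w t * w' t' * (a t - a t')) =
        (\<Sum>t\<in>S. \<Sum>t'\<in>S. (w t * a t) * w' t') - (\<Sum>t\<in>S. \<Sum>t'\<in>S. w t * (w' t' * a t'))"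
      by (simp add: sum_subtractf algebra_simps)
    also have "\<dots> = (\<Sum>t\<in>S. w t * a t) - (\<Sum>t\<in>S. w' t * a t)"
      by (simp add: sum_distrib_left[symmetric] sum_distrib_right[symmetric] w1 w'1)
    finally show ?thesis by simp
  qed
  have "\<bar>\<Sum>t\<in>S. \<Sum>t'\<in>S. w t * w' t' * (a t - a t')\<bar> \<le> (\<Sum>t\<in>S. \<Sum>t'\<in>S. \<bar>w t * w' t' * (a t - a t')\<bar>)"
    by (rule order_trans[OF sum_abs sum_mono[OF sum_abs]])
  also have "\<dots> \<le> (\<Sum>t\<in>S. \<Sum>t'\<in>S. w t * w' t' * R - (if t = t' then w t * w' t * R else 0))"
  proof (intro sum_mono)
    fix t t' assume t: "t \<in> S" and t': "t' \<in> S"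
    show "\<bar>w t * w' t' * (a t - a t')\<bar> \<le> w t * w' t' * R - (if t = t' then w t * w' t * R else 0)"
    proof (cases "t = t'")
      case True then show ?thesis by simp
    next
      case False
      have "\<bar>w t * w' t' * (a t - a t')\<bar> = w t * w' t' * \<bar>a t - a t'\<bar>"
        using w0 w'0 t t' by (simp add: abs_mult)
      also have "\<dots> \<le> w t * w' t' * R" using aR t t' w0 w'0 by (intro mult_left_mono) auto
      finally show ?thesis using False by simp
    qed
  qed
  also have "\<dots> = (\<Sum>t\<in>S. w t * R - w t * w' t * R)"
  proof (rule sum.cong[OF refl])
    fix t assume t: "t \<in> S"
    have "(\<Sum>t'\<in>S. w t * w' t' * R - (if t = t' then w t * w' t * R else 0))
        = (\<Sum>t'\<in>S. w t * w' t' * R) - (\<Sum>t'\<in>S. (if t = t' then w t * w' t * R else 0))"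
      by (rule sum_subtractf)
    also have "(\<Sum>t'\<in>S. w t * w' t' * R) = w t * R"
      using w'1 by (simp add: sum_distrib_left[symmetric] sum_distrib_right[symmetric] mult.commute mult.left_commute)
    also have "(\<Sum>t'\<in>S. (if t = t' then w t * w' t * R else 0)) = w t * w' t * R"
      using S t by (simp add: sum.delta)
    finally show "(\<Sum>t'\<in>S. w t * w' t' * R - (if t = t' then w t * w' t * R else 0)) = w t * R - w t * w' t * R" .
  qed
  also have "\<dots> = R - (\<Sum>t\<in>S. w t * w' t) * R"
    by (simp add: sum_subtractf sum_distrib_right[symmetric] w1)
  also have "\<dots> \<le> R - e * R"
  proof -
    have "(\<Sum>t\<in>S. w t * e) \<le> (\<Sum>t\<in>S. w t * w' t)" using w0 we by (intro sum_mono mult_left_mono) auto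
    then have "e \<le> (\<Sum>t\<in>S. w t * w' t)" using w1 by (simp add: sum_distrib_right[symmetric])
    then show ?thesis using R0 by (simp add: mult_right_mono)
  qed
  finally show ?thesis using eq by (simp add: algebra_simps)
qed

context KRsys begin

lemma bint_ind: "t \<in> {1..C j} \<Longrightarrow> f \<in> borel_measurable \<mu> \<Longrightarrow> (\<And>x. \<bar>f x\<bar> \<le> c) \<Longrightarrow>
   integrable \<mu> (\<lambda>x. indicator (B j t) x * f x :: real)"
proof -
  assume t: "t \<in> {1..C j}" and m: "f \<in> borel_measurable \<mu>" and b: "\<And>x. \<bar>f x\<bar> \<le> c"
  have c0: "0 \<le> c" using b[of undefined] by linarith
  show ?thesis
    by (rule bint[OF borel_measurable_times[OF ind_meas[OF t] m], of c]) (use b c0 in \<open>simp add: indicator_def\<close>)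
qed

lemma int_ind: "t \<in> {1..C j} \<Longrightarrow> integrable \<mu> (\<lambda>x. indicator (B j t) x :: real)"
  by (rule bint[OF ind_meas, of t j 1]) (simp_all add: indicator_def)

lemma int_lev: "k \<in> {1..C n} \<Longrightarrow> integrable \<mu> (\<lambda>x. indicator (lev n k q) x :: real)"
  by (rule bint[OF borel_measurable_indicator[OF lev_sets], of k n q 1]) (simp_all add: indicator_def)

lemma nu_le2: "t \<in> {1..C j} \<Longrightarrow> nu j l t \<le> mm j t"
  unfolding nu_def mm_def
proof (rule integral_mono)
  assume t: "t \<in> {1..C j}"
  show "integrable \<mu> (\<lambda>x. indicator (B j t) x * tw j l x)" by (rule bint_ind[OF t tw_meas tw_bdd])
  show "integrable \<mu> (\<lambda>x. indicator (B j t) x :: real)" by (rule int_ind[OF t])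
  show "indicator (B j t) x * tw j l x \<le> indicator (B j t) x" for x unfolding tw_def by (simp add: indicator_def)
qed

lemma W3: assumes j: "j \<ge> 1" and l: "l \<in> {1..C (Suc j)}" and t: "t \<in> {1..C j}"
  shows "nu j l t \<ge> 2 * mm (Suc j) l"
proof -
  have "KR_M T h B (Suc j) l t \<ge> 2" using M_ge2[of "Suc j" l t] j l t by simp
  then have c2: "card (MS j l t) \<ge> 2" using KRM_MS by simp
  then have "MS j l t \<noteq> {}" by auto
  then obtain Q1 where Q1: "Q1 \<in> MS j l t" by auto
  have "card (MS j l t - {Q1}) \<ge> 1" using c2 Q1 finite_MS by (simp add: card_Diff_singleton)
  then have "MS j l t - {Q1} \<noteq> {}" by (metis card.empty not_one_le_zero)
  then obtain Q2 where Q2: "Q2 \<in> MS j l t" "Q2 \<noteq> Q1" by auto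
  have inA: "(l, Q) \<in> Atm (Suc j)" if "Q \<in> MS j l t" for Q using that l unfolding MS_def by (auto simp: Atm_iff)
  have pw: "indicator (lev (Suc j) l Q1) x + indicator (lev (Suc j) l Q2) x \<le> indicator (B j t) x * tw j l x" for x
  proof (cases "x \<in> lev (Suc j) l Q1 \<or> x \<in> lev (Suc j) l Q2")
    case True
    then obtain Q where Q: "Q \<in> MS j l t" "x \<in> lev (Suc j) l Q" using Q1 Q2 by auto
    have a: "atm (Suc j) x = (l, Q)" using atm_eq[OF inA[OF Q(1)] Q(2)] .
    have "x \<in> B j t" using Q unfolding MS_def by auto
    moreover have "tw j l x = 1" using a unfolding tw_def knd_def by simp
    moreover have "\<not> (x \<in> lev (Suc j) l Q1 \<and> x \<in> lev (Suc j) l Q2)"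
      using atm_eq[OF inA[OF Q1]] atm_eq[OF inA[OF Q2(1)]] Q2(2) by (metis prod.inject)
    ultimately show ?thesis by (auto simp: indicator_def)
  next
    case False then show ?thesis unfolding tw_def by (simp add: indicator_def)
  qed
  have "2 * mm (Suc j) l = (\<integral>x. indicator (lev (Suc j) l Q1) x + indicator (lev (Suc j) l Q2) x \<partial>\<mu>)"
    using F3[OF l, of Q1] F3[OF l, of Q2] int_lev[OF l] by (simp add: Bochner_Integration.integral_add)
  also have "\<dots> \<le> nu j l t" unfolding nu_def
    by (rule integral_mono[OF _ bint_ind[OF t tw_meas tw_bdd] pw])
      (use int_lev[OF l] in \<open>simp add: Bochner_Integration.integrable_add\<close>)
  finally show ?thesis .
qed

definition avg :: "('a \<Rightarrow> real) \<Rightarrow> nat \<Rightarrow> nat \<Rightarrow> real" where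
  "avg a j t = AA a j t / real (h j t)"

definition ww :: "nat \<Rightarrow> nat \<Rightarrow> nat \<Rightarrow> real" where
  "ww j l t = real (h j t) * nu j l t / (real (h (Suc j) l) * mm (Suc j) l)"

lemma W12: "atomic j a \<Longrightarrow> l \<in> {1..C (Suc j)} \<Longrightarrow> AA a (Suc j) l * mm (Suc j) l = (\<Sum>t\<in>{1..C j}. AA a j t * nu j l t)"
  using W1 W2 by metis

lemma step_avg: assumes a: "atomic j a" and l: "l \<in> {1..C (Suc j)}" and mp: "mm (Suc j) l > 0"
  shows "avg a (Suc j) l = (\<Sum>t\<in>{1..C j}. ww j l t * avg a j t)"
proof -
  have H: "real (h (Suc j) l) > 0" using h_pos[OF l] by simp
  have "avg a (Suc j) l = AA a (Suc j) l * mm (Suc j) l / (real (h (Suc j) l) * mm (Suc j) l)"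
    unfolding avg_def using mp by simp
  also have "\<dots> = (\<Sum>t\<in>{1..C j}. AA a j t * nu j l t / (real (h (Suc j) l) * mm (Suc j) l))"
    unfolding W12[OF a l] by (simp add: sum_divide_distrib)
  also have "\<dots> = (\<Sum>t\<in>{1..C j}. ww j l t * avg a j t)"
  proof (rule sum.cong[OF refl])
    fix t assume t: "t \<in> {1..C j}"
    have "real (h j t) > 0" using h_pos[OF t] by simp
    then show "AA a j t * nu j l t / (real (h (Suc j) l) * mm (Suc j) l) = ww j l t * avg a j t"
      unfolding ww_def avg_def by (simp add: field_simps)
  qed
  finally show ?thesis .
qed

lemma ww_sum: assumes l: "l \<in> {1..C (Suc j)}" and mp: "mm (Suc j) l > 0"
  shows "(\<Sum>t\<in>{1..C j}. ww j l t) = 1"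
proof -
  have H: "real (h (Suc j) l) > 0" using h_pos[OF l] by simp
  have e: "(\<Sum>t\<in>{1..C j}. real (h j t) * nu j l t) = real (h (Suc j) l) * mm (Suc j) l"
    using W12[OF atomic_const l, of 1] by (simp add: AA_one)
  show ?thesis unfolding ww_def sum_divide_distrib[symmetric] e using H mp by simp
qed

lemma ww_ge: assumes j: "j \<ge> 1" and l: "l \<in> {1..C (Suc j)}" and t: "t \<in> {1..C j}" and mp: "mm (Suc j) l > 0"
  shows "ww j l t \<ge> 2 / L"
proof -
  have H: "real (h (Suc j) l) > 0" using h_pos[OF l] by simp
  have ht: "real (h j t) > 0" using h_pos[OF t] by simp
  have LR': "real (h (Suc j) l) \<le> L * real (h j t)" using LR[of "Suc j" l t] l t by simp
  have L0: "L > 0" using L2 by simp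
  have "2 / L \<le> 2 * real (h j t) / real (h (Suc j) l)"
    using LR' L0 H ht by (simp add: field_simps)
  also have "\<dots> = real (h j t) * (2 * mm (Suc j) l) / (real (h (Suc j) l) * mm (Suc j) l)"
    using mp by (simp add: field_simps)
  also have "\<dots> \<le> ww j l t" unfolding ww_def
    using W3[OF j l t] H ht mp by (intro divide_right_mono mult_left_mono) auto
  finally show ?thesis .
qed

lemma mm_pos: assumes j: "j \<ge> 1" and l: "l \<in> {1..C (Suc j)}" and t: "t \<in> {1..C j}" and mp: "mm (Suc j) l > 0"
  shows "mm j t > 0"
  using W3[OF j l t] nu_le2[OF t, of l] mp by linarith

definition Osc :: "('a \<Rightarrow> real) \<Rightarrow> nat \<Rightarrow> real \<Rightarrow> bool" where
  "Osc a j R \<longleftrightarrow> (\<forall>t\<in>{1..C j}. \<forall>t'\<in>{1..C j}. mm j t > 0 \<longrightarrow> mm j t' > 0 \<longrightarrow> \<bar>avg a j t - avg a j t'\<bar> \<le> R)"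

lemma Osc_step: assumes a: "atomic j a" and j: "j \<ge> 1" and O: "Osc a j R"
  shows "Osc a (Suc j) ((1 - 2 / L) * R)"
  unfolding Osc_def
proof (intro ballI impI)
  fix l l' assume l: "l \<in> {1..C (Suc j)}" and l': "l' \<in> {1..C (Suc j)}"
    and mp: "mm (Suc j) l > 0" and mp': "mm (Suc j) l' > 0"
  have allpos: "\<forall>t\<in>{1..C j}. mm j t > 0" using mm_pos[OF j l _ mp] by blast
  have w0: "\<forall>t\<in>{1..C j}. 0 \<le> ww j l t" using ww_ge[OF j l _ mp] L2 by (meson divide_nonneg_nonneg order_trans zero_le_numeral order.trans less_imp_le[OF order.strict_trans1[OF _ zero_less_numeral]] ) 
  show "\<bar>avg a (Suc j) l - avg a (Suc j) l'\<bar> \<le> (1 - 2 / L) * R"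
    unfolding step_avg[OF a l mp] step_avg[OF a l' mp']
  proof (rule pair_bound)
    show "finite {1..C j}" by simp
    show "\<forall>t\<in>{1..C j}. 0 \<le> ww j l t" by (rule w0)
    show "sum (ww j l) {1..C j} = 1" by (rule ww_sum[OF l mp])
    show "\<forall>t\<in>{1..C j}. 2 / L \<le> ww j l' t" using ww_ge[OF j l' _ mp'] by blast
    show "sum (ww j l') {1..C j} = 1" by (rule ww_sum[OF l' mp'])
    show "0 \<le> 2 / L" using L2 by simp
    show "\<forall>t\<in>{1..C j}. \<forall>t'\<in>{1..C j}. \<bar>avg a j t - avg a j t'\<bar> \<le> R" using O allpos unfolding Osc_def by blast
  qed
qed

end

context KRsys begin

lemma int_const: "(\<integral>x. (c::real) \<partial>\<mu>) = c"
  using prob_space.prob_space[OF mu_prob] by simp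

lemma int_le_const: "atomic n (f :: 'a \<Rightarrow> real) \<Longrightarrow> (\<And>x. f x \<le> c) \<Longrightarrow> (\<integral>x. f x \<partial>\<mu>) \<le> c"
proof -
  assume a: "atomic n f" and b: "\<And>x. f x \<le> c"
  have "(\<integral>x. f x \<partial>\<mu>) \<le> (\<integral>x. c \<partial>\<mu>)"
    by (rule integral_mono[OF atomic_int[OF a] atomic_int[OF atomic_const] b])
  then show ?thesis by (simp only: int_const)
qed

lemma ind_atomic: "t \<in> {1..C j} \<Longrightarrow> atomic j (\<lambda>x. indicator (B j t) x :: real)"
  unfolding atomic_def indicator_def using B_iff by simp

definition cc :: "(nat \<Rightarrow> real) \<Rightarrow> nat \<Rightarrow> real" where "cc v j = (\<integral>x. dd v j x \<partial>\<mu>)"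
definition ee :: "(nat \<Rightarrow> real) \<Rightarrow> nat \<Rightarrow> 'a \<Rightarrow> real" where "ee v j x = dd v j x - cc v j"

lemma ee_atomic: "atomic (Suc j) (ee v j)"
  unfolding ee_def by (rule atomic_comp[OF dd_atomic])

lemma cc_bound: "j \<ge> 1 \<Longrightarrow> \<bar>cc v j\<bar> \<le> L * pn v j"
proof -
  assume j: "j \<ge> 1"
  have "cc v j \<le> L * pn v j" unfolding cc_def
    by (rule int_le_const[OF dd_atomic]) (use dd_bound[OF j] in \<open>simp add: abs_le_iff\<close>)
  moreover have "- cc v j \<le> L * pn v j"
  proof -
    have "(\<integral>x. - dd v j x \<partial>\<mu>) \<le> L * pn v j"
      by (rule int_le_const[OF atomic_comp[OF dd_atomic]]) (use dd_bound[OF j] in \<open>simp add: abs_le_iff\<close>)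
    then show ?thesis unfolding cc_def by simp
  qed
  ultimately show ?thesis by simp
qed

lemma ee_bound: "j \<ge> 1 \<Longrightarrow> \<bar>ee v j x\<bar> \<le> 2 * L * pn v j"
  using dd_bound[of j v x] cc_bound[of j v] unfolding ee_def by simp

lemma ee_shift: "ee v j ((T ^^ lvl j x) x) = ee v j x" unfolding ee_def dd_shift ..

lemma ee_int0: "(\<integral>x. ee v j x \<partial>\<mu>) = 0"
proof -
  have "(\<integral>x. dd v j x - cc v j \<partial>\<mu>) = (\<integral>x. dd v j x \<partial>\<mu>) - (\<integral>x. cc v j \<partial>\<mu>)"
    by (rule Bochner_Integration.integral_diff[OF atomic_int[OF dd_atomic] atomic_int[OF atomic_const]])
  then show ?thesis unfolding ee_def using int_const by (simp add: cc_def)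
qed

definition th :: real where "th = 1 - 2 / L"

lemma th_range: "0 \<le> th" "th < 1" unfolding th_def using L2 by (auto simp: field_simps)

lemma avg_bound: assumes a: "atomic j a" and b: "\<And>x. \<bar>a x\<bar> \<le> K" and t: "t \<in> {1..C j}"
  shows "\<bar>avg a j t\<bar> \<le> K"
proof -
  have ht: "real (h j t) > 0" using h_pos[OF t] by simp
  have "\<bar>AA a j t\<bar> \<le> (\<Sum>q<h j t. \<bar>a (rep j (t,q))\<bar>)" unfolding AA_def by (rule sum_abs)
  also have "\<dots> \<le> (\<Sum>q<h j t. K)" by (rule sum_mono) (rule b)
  finally have "\<bar>AA a j t\<bar> \<le> K * real (h j t)" by (simp add: mult.commute)
  then have "\<bar>AA a j t\<bar> / real (h j t) \<le> K" using ht by (simp only: pos_divide_le_eq)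
  moreover have "\<bar>avg a j t\<bar> = \<bar>AA a j t\<bar> / real (h j t)" unfolding avg_def using ht by simp
  ultimately show ?thesis by simp
qed

lemma osc_dd: assumes i: "i \<ge> 1" shows "Osc (dd v i) (Suc i + k) (th ^ k * (2 * L * pn v i))"
proof (induction k)
  case 0
  show ?case unfolding Osc_def
  proof (intro ballI impI)
    fix t t' assume t: "t \<in> {1..C (Suc i + 0)}" and t': "t' \<in> {1..C (Suc i + 0)}"
    have "\<bar>avg (dd v i) (Suc i) t\<bar> \<le> L * pn v i" using avg_bound[OF dd_atomic dd_bound[OF i]] t by simp
    moreover have "\<bar>avg (dd v i) (Suc i) t'\<bar> \<le> L * pn v i" using avg_bound[OF dd_atomic dd_bound[OF i]] t' by simp
    ultimately show "\<bar>avg (dd v i) (Suc i + 0) t - avg (dd v i) (Suc i + 0) t'\<bar> \<le> th ^ 0 * (2 * L * pn v i)" by simp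
  qed
next
  case (Suc k)
  have a: "atomic (Suc i + k) (dd v i)" by (rule atomic_mono[OF _ dd_atomic]) simp
  have "Osc (dd v i) (Suc (Suc i + k)) ((1 - 2 / L) * (th ^ k * (2 * L * pn v i)))"
    by (rule Osc_step[OF a _ Suc]) simp
  then show ?case by (simp add: th_def mult.assoc)
qed

lemma cov_bound: assumes i: "i \<ge> 1" and j: "j = Suc i + k"
  shows "\<bar>\<integral>x. ee v i x * ee v j x \<partial>\<mu>\<bar> \<le> th ^ k * (2 * L * pn v i) * (2 * L * pn v j)"
proof -
  have j1: "j \<ge> 1" using j by simp
  define R where "R = th ^ k * (2 * L * pn v i)"
  define P where "P = 2 * L * pn v j"
  have R0: "R \<ge> 0" unfolding R_def using th_range pn_nonneg[of v i] L2 by simp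
  have P0: "P \<ge> 0" unfolding P_def using pn_nonneg[of v j] L2 by simp
  let ?b = "ee v j"
  have bm: "?b \<in> borel_measurable \<mu>" by (rule atomic_meas[OF ee_atomic])
  have bb: "\<And>x. \<bar>?b x\<bar> \<le> P" unfolding P_def by (rule ee_bound[OF j1])
  have ai: "atomic j (dd v i)" by (rule atomic_mono[OF _ dd_atomic]) (use j in simp)
  define \<beta> where "\<beta> t = (\<integral>x. indicator (B j t) x * ?b x \<partial>\<mu>)" for t
  have "(\<integral>x. ee v i x * ?b x \<partial>\<mu>) = (\<integral>x. dd v i x * ?b x - cc v i * ?b x \<partial>\<mu>)"
    unfolding ee_def[of v i] by (simp add: left_diff_distrib)
  also have "\<dots> = (\<integral>x. dd v i x * ?b x \<partial>\<mu>) - cc v i * (\<integral>x. ?b x \<partial>\<mu>)"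
  proof -
    have "integrable \<mu> (\<lambda>x. dd v i x * ?b x)"
      by (rule atomic_int[OF atomic_comp2[OF atomic_mono[OF _ dd_atomic] ee_atomic]]) (use j in simp)
    moreover have "integrable \<mu> (\<lambda>x. cc v i * ?b x)"
      by (rule atomic_int[OF atomic_comp[OF ee_atomic]])
    ultimately show ?thesis using atomic_int[OF ee_atomic] by simp
  qed
  also have "\<dots> = (\<integral>x. dd v i x * ?b x \<partial>\<mu>)" using ee_int0 by simp
  also have "\<dots> = (\<Sum>t\<in>{1..C j}. AA (dd v i) j t * \<beta> t)"
    unfolding \<beta>_def
    apply (rule DF2[OF ai bm bb])
    apply (rule ee_shift)
    done
  finally have cov: "(\<integral>x. ee v i x * ?b x \<partial>\<mu>) = (\<Sum>t\<in>{1..C j}. AA (dd v i) j t * \<beta> t)" .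
  have sum0: "(\<Sum>t\<in>{1..C j}. real (h j t) * \<beta> t) = 0"
  proof -
    have "(\<integral>x. ?b x \<partial>\<mu>) = (\<Sum>t\<in>{1..C j}. real (h j t) * \<beta> t)"
      unfolding \<beta>_def
      apply (rule F2[OF bm bb])
      apply (rule ee_shift)
      done
    then show ?thesis using ee_int0 by simp
  qed
  have bet: "\<bar>\<beta> t\<bar> \<le> P * mm j t" if t: "t \<in> {1..C j}" for t
  proof -
    have ia: "atomic (Suc j) (\<lambda>x. indicator (B j t) x :: real)" by (rule atomic_mono[OF _ ind_atomic[OF t]]) simp
    have "\<beta> t \<le> (\<integral>x. indicator (B j t) x * P \<partial>\<mu>)" unfolding \<beta>_def
    proof (rule integral_mono)
      show "integrable \<mu> (\<lambda>x. indicator (B j t) x * ?b x)" by (rule atomic_int[OF atomic_comp2[OF ia ee_atomic]])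
      show "integrable \<mu> (\<lambda>x. indicator (B j t) x * P)" by (rule atomic_int[OF atomic_comp[OF ia]])
      show "indicator (B j t) x * ?b x \<le> indicator (B j t) x * P" for x using bb[of x] by (simp add: indicator_def abs_le_iff)
    qed
    moreover have "(\<integral>x. indicator (B j t) x * (-P) \<partial>\<mu>) \<le> \<beta> t" unfolding \<beta>_def
    proof (rule integral_mono)
      show "integrable \<mu> (\<lambda>x. indicator (B j t) x * ?b x)" by (rule atomic_int[OF atomic_comp2[OF ia ee_atomic]])
      show "integrable \<mu> (\<lambda>x. indicator (B j t) x * (-P))" by (rule atomic_int[OF atomic_comp[OF ia]])
      show "indicator (B j t) x * (-P) \<le> indicator (B j t) x * ?b x" for x using bb[of x] by (simp add: indicator_def abs_le_iff)
    qed
    moreover have "(\<integral>x. indicator (B j t) x * P \<partial>\<mu>) = mm j t * P"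
      unfolding mm_def by (rule integral_mult_left_zero)
    moreover have "(\<integral>x. indicator (B j t) x * (-P) \<partial>\<mu>) = mm j t * (-P)"
      unfolding mm_def by (rule integral_mult_left_zero)
    ultimately have A: "\<beta> t \<le> mm j t * P" and Bb: "mm j t * (-P) \<le> \<beta> t" by linarith+
    show ?thesis using A Bb by (simp add: abs_le_iff mult.commute)
  qed
  obtain t0 where t0: "t0 \<in> {1..C j}" "mm j t0 > 0"
  proof -
    have "\<exists>t0\<in>{1..C j}. mm j t0 > 0"
    proof (rule ccontr)
      assume "\<not> ?thesis"
      then have "\<forall>t\<in>{1..C j}. mm j t = 0" using mm_nonneg by (meson not_le order_antisym)
      then have "(\<Sum>t\<in>{1..C j}. real (h j t) * mm j t) = 0" by simp
      then show False using F1[of j] by simp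
    qed
    then show ?thesis using that by blast
  qed
  have AAe: "AA (dd v i) j t = real (h j t) * avg (dd v i) j t" if "t \<in> {1..C j}" for t
    using h_pos[OF that] unfolding avg_def by simp
  have "(\<Sum>t\<in>{1..C j}. AA (dd v i) j t * \<beta> t)
      = (\<Sum>t\<in>{1..C j}. real (h j t) * \<beta> t * (avg (dd v i) j t - avg (dd v i) j t0))"
  proof -
    have "(\<Sum>t\<in>{1..C j}. real (h j t) * \<beta> t * (avg (dd v i) j t - avg (dd v i) j t0))
        = (\<Sum>t\<in>{1..C j}. real (h j t) * \<beta> t * avg (dd v i) j t) - (\<Sum>t\<in>{1..C j}. real (h j t) * \<beta> t) * avg (dd v i) j t0"
      by (simp add: right_diff_distrib sum_subtractf sum_distrib_right)
    also have "\<dots> = (\<Sum>t\<in>{1..C j}. real (h j t) * \<beta> t * avg (dd v i) j t)" using sum0 by simp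
    also have "\<dots> = (\<Sum>t\<in>{1..C j}. AA (dd v i) j t * \<beta> t)"
      by (rule sum.cong[OF refl]) (simp add: AAe)
    finally show ?thesis by simp
  qed
  then have eqs: "\<bar>\<integral>x. ee v i x * ?b x \<partial>\<mu>\<bar> = \<bar>\<Sum>t\<in>{1..C j}. real (h j t) * \<beta> t * (avg (dd v i) j t - avg (dd v i) j t0)\<bar>"
    using cov by simp
  have "\<bar>\<Sum>t\<in>{1..C j}. real (h j t) * \<beta> t * (avg (dd v i) j t - avg (dd v i) j t0)\<bar>
      \<le> (\<Sum>t\<in>{1..C j}. \<bar>real (h j t) * \<beta> t * (avg (dd v i) j t - avg (dd v i) j t0)\<bar>)" by (rule sum_abs)
  also have "\<dots> \<le> (\<Sum>t\<in>{1..C j}. real (h j t) * (P * mm j t) * R)"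
  proof (rule sum_mono)
    fix t assume t: "t \<in> {1..C j}"
    show "\<bar>real (h j t) * \<beta> t * (avg (dd v i) j t - avg (dd v i) j t0)\<bar> \<le> real (h j t) * (P * mm j t) * R"
    proof (cases "mm j t > 0")
      case True
      have "\<bar>avg (dd v i) j t - avg (dd v i) j t0\<bar> \<le> R"
        using osc_dd[OF i, of v k] t t0 True unfolding Osc_def R_def j by blast
      then show ?thesis using bet[OF t] R0 by (simp add: abs_mult mult_mono)
    next
      case False
      then have "mm j t = 0" using mm_nonneg[of j t] by simp
      then have "\<beta> t = 0" using bet[OF t] by simp
      then show ?thesis using R0 P0 mm_nonneg[of j t] by simp
    qed
  qed
  also have "\<dots> = (\<Sum>t\<in>{1..C j}. (P * R) * (real (h j t) * mm j t))"
    by (rule sum.cong[OF refl]) simp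
  also have "\<dots> = P * R * (\<Sum>t\<in>{1..C j}. real (h j t) * mm j t)" by (rule sum_distrib_left[symmetric])
  also have "\<dots> = P * R" using F1 by simp
  finally have "\<bar>\<integral>x. ee v i x * ?b x \<partial>\<mu>\<bar> \<le> P * R" using eqs by simp
  then show ?thesis unfolding R_def P_def by (simp add: mult_ac)
qed

lemma var_bound: "j \<ge> 1 \<Longrightarrow> \<bar>\<integral>x. ee v j x * ee v j x \<partial>\<mu>\<bar> \<le> (2 * L * pn v j) * (2 * L * pn v j)"
proof -
  assume j: "j \<ge> 1"
  have "(\<integral>x. ee v j x * ee v j x \<partial>\<mu>) \<le> (2 * L * pn v j) * (2 * L * pn v j)"
  proof (rule int_le_const[OF atomic_comp2[OF ee_atomic ee_atomic]])
    fix x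
    have "\<bar>ee v j x\<bar> * \<bar>ee v j x\<bar> \<le> (2 * L * pn v j) * (2 * L * pn v j)"
      using ee_bound[OF j, of v x] by (intro mult_mono) auto
    then show "ee v j x * ee v j x \<le> (2 * L * pn v j) * (2 * L * pn v j)" by (simp add: abs_mult[symmetric])
  qed
  moreover have "0 \<le> (\<integral>x. ee v j x * ee v j x \<partial>\<mu>)" by (rule integral_nonneg_AE) simp
  ultimately show ?thesis by simp
qed

end

definition dst :: "nat \<Rightarrow> nat \<Rightarrow> nat" where "dst i j = (if i \<le> j then j - i else i - j)"

lemma dst_sym: "dst i j = dst j i" unfolding dst_def by auto

lemma geo_inj: fixes \<rho> :: real assumes r: "0 \<le> \<rho>" "\<rho> < 1" and J: "finite J" and inj: "inj_on f J"
  shows "(\<Sum>j\<in>J. \<rho> ^ f j) \<le> 1 / (1 - \<rho>)"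
proof -
  have "(\<Sum>j\<in>J. \<rho> ^ f j) = (\<Sum>n\<in>f ` J. \<rho> ^ n)" by (simp add: sum.reindex[OF inj])
  also have "\<dots> \<le> (\<Sum>n. \<rho> ^ n)"
    by (rule sum_le_suminf) (use r J in \<open>auto intro: summable_geometric\<close>)
  also have "\<dots> = 1 / (1 - \<rho>)" using r by (simp add: suminf_geometric)
  finally show ?thesis .
qed

lemma geo_dst: fixes \<rho> :: real assumes r: "0 \<le> \<rho>" "\<rho> < 1" and J: "finite J"
  shows "(\<Sum>j\<in>J. \<rho> ^ dst i j) \<le> 2 / (1 - \<rho>)"
proof -
  have "(\<Sum>j\<in>J. \<rho> ^ dst i j) = (\<Sum>j\<in>J \<inter> {..i}. \<rho> ^ dst i j) + (\<Sum>j\<in>J - {..i}. \<rho> ^ dst i j)"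
    by (rule sum.Int_Diff[OF J])
  also have "(\<Sum>j\<in>J \<inter> {..i}. \<rho> ^ dst i j) = (\<Sum>j\<in>J \<inter> {..i}. \<rho> ^ (i - j))"
    by (rule sum.cong) (auto simp: dst_def)
  also have "(\<Sum>j\<in>J - {..i}. \<rho> ^ dst i j) = (\<Sum>j\<in>J - {..i}. \<rho> ^ (j - i))"
    by (rule sum.cong) (auto simp: dst_def)
  also have "(\<Sum>j\<in>J \<inter> {..i}. \<rho> ^ (i - j)) \<le> 1 / (1 - \<rho>)"
    by (rule geo_inj[OF r]) (use J in \<open>auto simp: inj_on_def\<close>)
  also have "(\<Sum>j\<in>J - {..i}. \<rho> ^ (j - i)) \<le> 1 / (1 - \<rho>)"
    by (rule geo_inj[OF r]) (use J in \<open>auto simp: inj_on_def\<close>)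
  finally show ?thesis by simp
qed

lemma quad_bound:
  fixes c :: "nat \<Rightarrow> nat \<Rightarrow> real" and p :: "nat \<Rightarrow> real" and \<rho> K :: real
  assumes r: "0 \<le> \<rho>" "\<rho> < 1" and J: "finite J" and K: "0 \<le> K" and p0: "\<And>j. 0 \<le> p j"
    and cb: "\<And>i j. i \<in> J \<Longrightarrow> j \<in> J \<Longrightarrow> \<bar>c i j\<bar> \<le> K * \<rho> ^ dst i j * p i * p j"
  shows "(\<Sum>i\<in>J. \<Sum>j\<in>J. c i j) \<le> K * (2 / (1 - \<rho>)) * (\<Sum>j\<in>J. (p j)\<^sup>2)"
proof -
  have "(\<Sum>i\<in>J. \<Sum>j\<in>J. c i j) \<le> (\<Sum>i\<in>J. \<Sum>j\<in>J. K * \<rho> ^ dst i j * ((p i)\<^sup>2 + (p j)\<^sup>2) / 2)"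
  proof (intro sum_mono)
    fix i j assume i: "i \<in> J" and j: "j \<in> J"
    have "p i * p j \<le> ((p i)\<^sup>2 + (p j)\<^sup>2) / 2"
      using sum_squares_bound[of "p i" "p j"] by (simp add: power2_eq_square field_simps)
    then have "K * \<rho> ^ dst i j * (p i * p j) \<le> K * \<rho> ^ dst i j * (((p i)\<^sup>2 + (p j)\<^sup>2) / 2)"
      using K r by (intro mult_left_mono) auto
    then show "c i j \<le> K * \<rho> ^ dst i j * ((p i)\<^sup>2 + (p j)\<^sup>2) / 2"
      using cb[OF i j] by (simp add: mult.assoc abs_le_iff)
  qed
  also have "\<dots> = (\<Sum>i\<in>J. \<Sum>j\<in>J. K / 2 * (\<rho> ^ dst i j * (p i)\<^sup>2)) + (\<Sum>i\<in>J. \<Sum>j\<in>J. K / 2 * (\<rho> ^ dst i j * (p j)\<^sup>2))"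
    unfolding sum.distrib[symmetric] by (intro sum.cong refl) (simp add: field_simps)
  also have "(\<Sum>i\<in>J. \<Sum>j\<in>J. K / 2 * (\<rho> ^ dst i j * (p j)\<^sup>2)) = (\<Sum>i\<in>J. \<Sum>j\<in>J. K / 2 * (\<rho> ^ dst i j * (p i)\<^sup>2))"
    by (subst sum.swap) (simp add: dst_sym)
  also have "(\<Sum>i\<in>J. \<Sum>j\<in>J. K / 2 * (\<rho> ^ dst i j * (p i)\<^sup>2)) = (\<Sum>i\<in>J. K / 2 * (p i)\<^sup>2 * (\<Sum>j\<in>J. \<rho> ^ dst i j))"
    unfolding sum_distrib_left by (intro sum.cong refl) (simp add: mult_ac)
  also have "\<dots> \<le> (\<Sum>i\<in>J. K / 2 * (p i)\<^sup>2 * (2 / (1 - \<rho>)))"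
    by (intro sum_mono mult_left_mono geo_dst[OF r J]) (use K in auto)
  also have "\<dots> = K / (1 - \<rho>) * (\<Sum>j\<in>J. (p j)\<^sup>2)"
    unfolding sum_distrib_left using r by (intro sum.cong refl) (simp add: field_simps)
  finally have X: "(\<Sum>i\<in>J. \<Sum>j\<in>J. c i j) \<le> K / (1 - \<rho>) * (\<Sum>j\<in>J. (p j)\<^sup>2) + K / (1 - \<rho>) * (\<Sum>j\<in>J. (p j)\<^sup>2)"
    by (simp add: add_mono)
  have "K / (1 - \<rho>) * (\<Sum>j\<in>J. (p j)\<^sup>2) + K / (1 - \<rho>) * (\<Sum>j\<in>J. (p j)\<^sup>2) = K * (2 / (1 - \<rho>)) * (\<Sum>j\<in>J. (p j)\<^sup>2)"
    by (simp add: field_simps)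
  then show ?thesis using X by linarith
qed

context KRsys begin

definition rh :: real where "rh = max th (1/2)"
definition KK :: real where "KK = 8 * L * L"

lemma rh_range: "0 \<le> rh" "rh < 1" "th \<le> rh" "1/2 \<le> rh" unfolding rh_def using th_range by auto

lemma cov_all: assumes i: "i \<ge> 1" and j: "j \<ge> 1"
  shows "\<bar>\<integral>x. ee v i x * ee v j x \<partial>\<mu>\<bar> \<le> KK * rh ^ dst i j * pn v i * pn v j"
proof -
  have L0: "L > 0" using L2 by simp
  have pp: "0 \<le> pn v i" "0 \<le> pn v j" using pn_nonneg by auto
  have gen: "\<bar>\<integral>x. ee v a x * ee v b x \<partial>\<mu>\<bar> \<le> KK * rh ^ dst a b * pn v a * pn v b" if a: "a \<ge> 1" and ab: "a < b" for a b
  proof -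
    define k where "k = b - Suc a"
    have b: "b = Suc a + k" using ab unfolding k_def by simp
    have "\<bar>\<integral>x. ee v a x * ee v b x \<partial>\<mu>\<bar> \<le> th ^ k * (2 * L * pn v a) * (2 * L * pn v b)"
      by (rule cov_bound[OF a b])
    also have "\<dots> = 4 * L * L * th ^ k * pn v a * pn v b" by (simp add: mult_ac)
    also have "\<dots> \<le> 4 * L * L * (2 * rh ^ Suc k) * pn v a * pn v b"
    proof -
      have "th ^ k \<le> rh ^ k" using rh_range th_range by (intro power_mono) auto
      also have "\<dots> \<le> 2 * rh ^ Suc k" using rh_range by (simp add: mult_left_mono[of "1" "2 * rh"])
      finally show ?thesis using L0 pn_nonneg[of v a] pn_nonneg[of v b]
        by (intro mult_right_mono mult_left_mono) auto
    qed
    also have "\<dots> = KK * rh ^ dst a b * pn v a * pn v b" unfolding KK_def dst_def using b by simp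
    finally show ?thesis .
  qed
  show ?thesis
  proof (cases i j rule: linorder_cases)
    case less then show ?thesis using gen[OF i less] by simp
  next
    case equal
    have "\<bar>\<integral>x. ee v j x * ee v j x \<partial>\<mu>\<bar> \<le> (2 * L * pn v j) * (2 * L * pn v j)" by (rule var_bound[OF j])
    also have "\<dots> \<le> KK * rh ^ dst j j * pn v j * pn v j"
    proof -
      have e1: "(2 * L * pn v j) * (2 * L * pn v j) = 4 * (L * L * pn v j * pn v j)" by (simp add: mult_ac)
      have e2: "KK * rh ^ dst j j * pn v j * pn v j = 8 * (L * L * pn v j * pn v j)" by (simp add: KK_def dst_def mult_ac)
      have "0 \<le> L * L * pn v j * pn v j" using L0 pn_nonneg[of v j] by simp
      then show ?thesis unfolding e1 e2 by linarith
    qed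
    finally show ?thesis using equal by simp
  next
    case greater
    have "\<bar>\<integral>x. ee v j x * ee v i x \<partial>\<mu>\<bar> \<le> KK * rh ^ dst j i * pn v j * pn v i" using gen[OF j greater] .
    then show ?thesis by (simp add: mult.commute dst_sym mult.left_commute)
  qed
qed

lemma sq_sum_bound: assumes J: "finite J" and J1: "\<forall>j\<in>J. j \<ge> 1"
  shows "(\<integral>x. (\<Sum>j\<in>J. ee v j x)\<^sup>2 \<partial>\<mu>) \<le> KK * (2 / (1 - rh)) * (\<Sum>j\<in>J. (pn v j)\<^sup>2)"
proof -
  have "(\<integral>x. (\<Sum>j\<in>J. ee v j x)\<^sup>2 \<partial>\<mu>) = (\<integral>x. (\<Sum>i\<in>J. \<Sum>j\<in>J. ee v i x * ee v j x) \<partial>\<mu>)"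
    by (simp add: power2_eq_square sum_product)
  also have "\<dots> = (\<Sum>i\<in>J. \<Sum>j\<in>J. (\<integral>x. ee v i x * ee v j x \<partial>\<mu>))"
  proof -
    have ii: "integrable \<mu> (\<lambda>x. ee v i x * ee v j x)" for i j
      by (rule atomic_int[OF atomic_comp2[OF atomic_mono[of "Suc i" "Suc i + Suc j", OF _ ee_atomic]
          atomic_mono[of "Suc j" "Suc i + Suc j", OF _ ee_atomic]]]) simp_all
    show ?thesis using ii by (simp add: Bochner_Integration.integral_sum)
  qed
  also have "\<dots> \<le> KK * (2 / (1 - rh)) * (\<Sum>j\<in>J. (pn v j)\<^sup>2)"
    by (rule quad_bound[OF rh_range(1,2) J _ pn_nonneg cov_all]) (use J1 L2 in \<open>auto simp: KK_def\<close>)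
  finally show ?thesis .
qed

end

lemma amgm_le: fixes a d :: real assumes a: "a > 0" and d: "d \<ge> 0" shows "d \<le> 1 / a + a * d\<^sup>2"
proof (cases "d \<le> 1 / a")
  case True
  have "0 \<le> a * d\<^sup>2" using a by simp
  then show ?thesis using True by linarith
next
  case False
  then have "a * d > 1" using a by (simp add: field_simps)
  then have "d * 1 \<le> d * (a * d)" using d by (intro mult_left_mono) auto
  then have "d \<le> a * d\<^sup>2" by (simp add: power2_eq_square mult_ac)
  moreover have "0 \<le> 1 / a" using a by simp
  ultimately show ?thesis by linarith
qed

context KRsys begin

definition Fs :: "(nat \<Rightarrow> real) \<Rightarrow> nat \<Rightarrow> 'a \<Rightarrow> real" where
  "Fs v n x = (\<Sum>j\<in>{1..<n}. ee v j x)"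

lemma Fs_atomic: "atomic n (Fs v n)"
  unfolding atomic_def Fs_def
proof (intro allI impI sum.cong refl)
  fix x y j assume e: "atm n x = atm n y" and j: "j \<in> {1..<n}"
  have "atomic n (ee v j)" by (rule atomic_mono[OF _ ee_atomic]) (use j in auto)
  then show "ee v j x = ee v j y" using e unfolding atomic_def by blast
qed

lemma Fs_meas: "Fs v n \<in> borel_measurable \<mu>" by (rule atomic_meas[OF Fs_atomic])

lemma g_Fs: "KR_g T C h B v n x - (\<integral>y. KR_g T C h B v n y \<partial>\<mu>) = Fs v n x"
proof -
  have "(\<integral>y. KR_g T C h B v n y \<partial>\<mu>) = (\<integral>y. (\<Sum>j\<in>{1..<n}. dd v j y) \<partial>\<mu>)" unfolding g_dd ..
  also have "\<dots> = (\<Sum>j\<in>{1..<n}. cc v j)" unfolding cc_def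
    by (rule Bochner_Integration.integral_sum) (rule atomic_int[OF dd_atomic])
  finally show ?thesis unfolding g_dd Fs_def ee_def by (simp add: sum_subtractf)
qed

definition tl :: "(nat \<Rightarrow> real) \<Rightarrow> nat \<Rightarrow> real" where "tl v n = (\<Sum>k. (pn v (k + n))\<^sup>2)"

definition K2 :: real where "K2 = KK * (2 / (1 - rh))"

lemma K2_nonneg: "K2 \<ge> 0" unfolding K2_def KK_def using rh_range by simp

context
  fixes v :: "nat \<Rightarrow> real"
  assumes summ: "summable (\<lambda>n. (pn v (Suc (Suc n)))\<^sup>2)"
begin

lemma summ_n: "n \<ge> 2 \<Longrightarrow> summable (\<lambda>k. (pn v (k + n))\<^sup>2)"
proof -
  assume n: "n \<ge> 2"
  have "summable (\<lambda>k. (\<lambda>m. (pn v (Suc (Suc m)))\<^sup>2) (k + (n - 2)))" using summ by (subst summable_iff_shift)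
  moreover have "(\<lambda>k. (\<lambda>m. (pn v (Suc (Suc m)))\<^sup>2) (k + (n - 2))) = (\<lambda>k. (pn v (k + n))\<^sup>2)"
  proof
    fix k
    have e: "Suc (Suc (k + (n - 2))) = k + n" using n by simp
    show "(\<lambda>m. (pn v (Suc (Suc m)))\<^sup>2) (k + (n - 2)) = (pn v (k + n))\<^sup>2" by (simp only: e)
  qed
  ultimately show ?thesis by simp
qed

lemma tl_nonneg: "n \<ge> 2 \<Longrightarrow> tl v n \<ge> 0" unfolding tl_def by (rule suminf_nonneg[OF summ_n]) auto

lemma tl_part: assumes n: "n \<ge> 2" shows "(\<Sum>j\<in>{n..<m}. (pn v j)\<^sup>2) \<le> tl v n"
proof -
  have inj: "inj_on (\<lambda>j. j - n) {n..<m}" by (auto simp: inj_on_def)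
  have "(\<Sum>j\<in>{n..<m}. (pn v j)\<^sup>2) = (\<Sum>j\<in>{n..<m}. (pn v ((j - n) + n))\<^sup>2)" by (intro sum.cong) auto
  also have "\<dots> = (\<Sum>k\<in>(\<lambda>j. j - n) ` {n..<m}. (pn v (k + n))\<^sup>2)" by (simp add: sum.reindex[OF inj])
  also have "\<dots> \<le> tl v n" unfolding tl_def by (rule sum_le_suminf[OF summ_n[OF n]]) auto
  finally show ?thesis .
qed

lemma tl_lim: "tl v \<longlonglongrightarrow> 0"
proof (rule LIMSEQ_offset[where k = 2])
  let ?q = "\<lambda>m. (pn v (Suc (Suc m)))\<^sup>2"
  have e: "tl v (n + 2) = suminf ?q - (\<Sum>i<n. ?q i)" for n
  proof -
    have "tl v (n + 2) = (\<Sum>k. ?q (k + n))" unfolding tl_def by (simp add: add.assoc)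
    also have "\<dots> = suminf ?q - (\<Sum>i<n. ?q i)" by (rule suminf_minus_initial_segment[OF summ])
    finally show ?thesis .
  qed
  have "(\<lambda>n. suminf ?q - (\<Sum>i<n. ?q i)) \<longlonglongrightarrow> suminf ?q - suminf ?q"
    by (intro tendsto_diff tendsto_const summable_LIMSEQ[OF summ])
  then show "(\<lambda>n. tl v (n + 2)) \<longlonglongrightarrow> 0" unfolding e by simp
qed

lemma L2_bound: assumes n: "n \<ge> 2" and m: "m \<ge> 2"
  shows "(\<integral>x. (Fs v m x - Fs v n x)\<^sup>2 \<partial>\<mu>) \<le> K2 * (tl v n + tl v m)"
proof -
  have one: "(\<integral>x. (Fs v b x - Fs v a x)\<^sup>2 \<partial>\<mu>) \<le> K2 * tl v a" if ab: "a \<le> b" and a: "a \<ge> 2" for a b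
  proof -
    have "Fs v b x - Fs v a x = (\<Sum>j\<in>{a..<b}. ee v j x)" for x
    proof -
      have "(\<Sum>j\<in>{1..<a}. ee v j x) + (\<Sum>j\<in>{a..<b}. ee v j x) = (\<Sum>j\<in>{1..<b}. ee v j x)"
        by (rule sum.atLeastLessThan_concat) (use ab a in auto)
      then show ?thesis unfolding Fs_def by linarith
    qed
    then have "(\<integral>x. (Fs v b x - Fs v a x)\<^sup>2 \<partial>\<mu>) = (\<integral>x. (\<Sum>j\<in>{a..<b}. ee v j x)\<^sup>2 \<partial>\<mu>)" by (simp only:)
    also have "\<dots> \<le> K2 * (\<Sum>j\<in>{a..<b}. (pn v j)\<^sup>2)" unfolding K2_def
      by (rule sq_sum_bound) (use a in auto)
    also have "\<dots> \<le> K2 * tl v a" using tl_part[OF a] K2_nonneg by (intro mult_left_mono) auto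
    finally show ?thesis .
  qed
  show ?thesis
  proof (cases "n \<le> m")
    case True
    have "0 \<le> K2 * tl v m" using tl_nonneg[OF m] K2_nonneg by simp
    then show ?thesis using one[OF True n] unfolding distrib_left by linarith
  next
    case False
    have "(\<integral>x. (Fs v m x - Fs v n x)\<^sup>2 \<partial>\<mu>) = (\<integral>x. (Fs v n x - Fs v m x)\<^sup>2 \<partial>\<mu>)"
      by (simp add: power2_commute)
    moreover have "0 \<le> K2 * tl v n" using tl_nonneg[OF n] K2_nonneg by simp
    moreover have "(\<integral>x. (Fs v n x - Fs v m x)\<^sup>2 \<partial>\<mu>) \<le> K2 * tl v m" using one[of m n] False m by simp
    ultimately show ?thesis unfolding distrib_left by linarith
  qed
qed

lemma nn_L2: "(\<integral>\<^sup>+ x. ennreal ((Fs v m x - Fs v n x)\<^sup>2) \<partial>\<mu>) = ennreal (\<integral>x. (Fs v m x - Fs v n x)\<^sup>2 \<partial>\<mu>)"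
proof (rule nn_integral_eq_integral)
  show "integrable \<mu> (\<lambda>x. (Fs v m x - Fs v n x)\<^sup>2)"
    by (rule atomic_int[OF atomic_comp2[OF atomic_mono[of m "m + n", OF _ Fs_atomic] atomic_mono[of n "m + n", OF _ Fs_atomic]]]) simp_all
qed simp

end
end

context KRsys begin

lemma ennreal_meas: "g \<in> borel_measurable \<mu> \<Longrightarrow> (\<lambda>x. ennreal (g x)) \<in> borel_measurable \<mu>"
  by (rule measurable_compose[OF _ measurable_ennreal])

lemma Fs_diff_atomic: "atomic (m + n) (\<lambda>x. Fs v m x - Fs v n x)"
  by (rule atomic_comp2[OF atomic_mono[of m "m + n", OF _ Fs_atomic] atomic_mono[of n "m + n", OF _ Fs_atomic]]) simp_all

context
  fixes v :: "nat \<Rightarrow> real"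
  assumes summ: "summable (\<lambda>n. (pn v (Suc (Suc n)))\<^sup>2)"
begin

lemma subseq_ex: "\<exists>nk :: nat \<Rightarrow> nat. (\<forall>k. nk k \<ge> 2 \<and> nk k \<le> nk (Suc k) \<and> tl v (nk k) < (1/4)^k)"
proof -
  have "\<forall>k. \<exists>N. \<forall>n\<ge>N. tl v n < (1/4)^k"
  proof
    fix k
    have "eventually (\<lambda>n. tl v n < (1/4)^k) sequentially"
      by (rule order_tendstoD(2)[OF tl_lim[OF summ]]) simp
    then show "\<exists>N. \<forall>n\<ge>N. tl v n < (1/4)^k" by (simp add: eventually_sequentially)
  qed
  then obtain N where N: "\<And>k n. n \<ge> N k \<Longrightarrow> tl v n < (1/4)^k" by metis
  define nk where "nk k = 2 + (\<Sum>i\<le>k. N i)" for k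
  have "nk k \<ge> N k" for k unfolding nk_def using member_le_sum[of k "{..k}" N] by simp
  moreover have "nk k \<le> nk (Suc k)" for k unfolding nk_def by simp
  ultimately show ?thesis using N by (intro exI[of _ nk]) (auto simp: nk_def)
qed

lemma L2_limit: "\<exists>f \<in> borel_measurable \<mu>. (\<integral>\<^sup>+ x. ennreal ((f x)\<^sup>2) \<partial>\<mu>) < \<infinity> \<and>
   (\<lambda>n. \<integral>\<^sup>+ x. ennreal ((Fs v n x - f x)\<^sup>2) \<partial>\<mu>) \<longlonglongrightarrow> 0"
proof -
  obtain nk where nk: "\<And>k. nk k \<ge> 2" "\<And>k. nk k \<le> nk (Suc k)" "\<And>k. tl v (nk k) < (1/4)^k"
    using subseq_ex by blast
  define D where "D k x = Fs v (nk (Suc k)) x - Fs v (nk k) x" for k x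
  have Dat: "atomic (nk (Suc k) + nk k) (D k)" for k unfolding D_def by (rule Fs_diff_atomic)
  have intD: "(\<integral>x. (D k x)\<^sup>2 \<partial>\<mu>) \<le> K2 * 2 * (1/4)^k" for k
  proof -
    have "(\<integral>x. (D k x)\<^sup>2 \<partial>\<mu>) \<le> K2 * (tl v (nk k) + tl v (nk (Suc k)))"
      unfolding D_def by (rule L2_bound[OF summ nk(1) nk(1)])
    also have "\<dots> \<le> K2 * ((1/4)^k + (1/4)^k)"
    proof -
      have "tl v (nk (Suc k)) * 4 < (1/4)^k" using nk(3)[of "Suc k"] by simp
      then have "tl v (nk (Suc k)) \<le> (1/4)^k" using tl_nonneg[OF summ nk(1)[of "Suc k"]] by linarith
      then show ?thesis using nk(3)[of k] K2_nonneg by (intro mult_left_mono) auto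
    qed
    finally show ?thesis by simp
  qed
  define G where "G x = (\<Sum>k. ennreal (2^k * (D k x)\<^sup>2))" for x
  have Gm: "(\<lambda>x. ennreal (2^k * (D k x)\<^sup>2)) \<in> borel_measurable \<mu>" for k
    by (rule ennreal_meas[OF atomic_meas[OF atomic_comp[OF Dat]]])
  have "(\<integral>\<^sup>+ x. G x \<partial>\<mu>) = (\<Sum>k. \<integral>\<^sup>+ x. ennreal (2^k * (D k x)\<^sup>2) \<partial>\<mu>)"
    unfolding G_def by (rule nn_integral_suminf[OF Gm])
  also have "\<dots> \<le> (\<Sum>k. ennreal (K2 * 2 * (1/2)^k))"
  proof (rule suminf_le)
    fix k
    have "(\<integral>\<^sup>+ x. ennreal (2^k * (D k x)\<^sup>2) \<partial>\<mu>) = ennreal (\<integral>x. 2^k * (D k x)\<^sup>2 \<partial>\<mu>)"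
      by (rule nn_integral_eq_integral[OF atomic_int[OF atomic_comp[OF Dat]]]) simp
    also have "(\<integral>x. 2^k * (D k x)\<^sup>2 \<partial>\<mu>) = 2^k * (\<integral>x. (D k x)\<^sup>2 \<partial>\<mu>)" by simp
    also have "\<dots> \<le> 2^k * (K2 * 2 * (1/4)^k)" using intD[of k] by (intro mult_left_mono) auto
    also have "\<dots> = K2 * 2 * ((2::real)^k * (1/4)^k)" by (simp only: mult_ac)
    also have "(2::real)^k * (1/4)^k = (1/2)^k" by (simp add: power_mult_distrib[symmetric])
    finally have "(\<integral>\<^sup>+ x. ennreal (2^k * (D k x)\<^sup>2) \<partial>\<mu>) \<le> ennreal (K2 * 2 * (1/2)^k)" by (simp add: ennreal_leI)
    then show "(\<integral>\<^sup>+ x. ennreal (2^k * (D k x)\<^sup>2) \<partial>\<mu>) \<le> ennreal (K2 * 2 * (1/2)^k)" .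
  qed auto
  also have "\<dots> = ennreal (\<Sum>k. K2 * 2 * (1/2)^k)"
    by (rule suminf_ennreal2) (use K2_nonneg in \<open>auto intro!: summable_mult summable_geometric\<close>)
  finally have "(\<integral>\<^sup>+ x. G x \<partial>\<mu>) \<noteq> top" by (rule neq_top_trans[OF ennreal_neq_top])
  then have "(\<integral>\<^sup>+ x. G x \<partial>\<mu>) \<noteq> \<infinity>" by simp
  then have aeG: "AE x in \<mu>. G x \<noteq> \<infinity>"
    by (intro nn_integral_noteq_infinite) (unfold G_def, rule borel_measurable_suminf_order[OF Gm])
  have conv: "convergent (\<lambda>k. Fs v (nk k) x)" if Gx: "G x \<noteq> \<infinity>" for x
  proof -
    have s1: "summable (\<lambda>k. 2^k * (D k x)\<^sup>2)"
      by (rule summable_suminf_not_top) (use Gx in \<open>auto simp: G_def\<close>)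
    have s2: "summable (\<lambda>k. (1/2)^k + 2^k * (D k x)\<^sup>2)"
      by (intro summable_add s1 summable_geometric) simp
    have b: "norm \<bar>D k x\<bar> \<le> (1/2)^k + 2^k * (D k x)\<^sup>2" for k
      using amgm_le[of "2^k" "\<bar>D k x\<bar>"] by (simp add: power_divide)
    have "summable (\<lambda>k. \<bar>D k x\<bar>)" by (rule summable_comparison_test'[OF s2 b])
    then have "summable (\<lambda>k. D k x)" by (rule summable_rabs_cancel)
    then have "(\<lambda>k. \<Sum>i<k. D i x) \<longlonglongrightarrow> suminf (\<lambda>k. D k x)" by (rule summable_LIMSEQ)
    then have "(\<lambda>k. Fs v (nk 0) x + (\<Sum>i<k. D i x)) \<longlonglongrightarrow> Fs v (nk 0) x + suminf (\<lambda>k. D k x)"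
      by (intro tendsto_add tendsto_const)
    moreover have "Fs v (nk 0) x + (\<Sum>i<k. D i x) = Fs v (nk k) x" for k
      unfolding D_def using sum_lessThan_telescope[of "\<lambda>i. Fs v (nk i) x" k] by simp
    ultimately show ?thesis unfolding convergent_def by auto
  qed
  define f where "f x = lim (\<lambda>k. Fs v (nk k) x)" for x
  have fm: "f \<in> borel_measurable \<mu>" unfolding f_def by (rule borel_measurable_lim_metric[OF Fs_meas])
  have aelim: "AE x in \<mu>. (\<lambda>k. Fs v (nk k) x) \<longlonglongrightarrow> f x"
    using aeG by eventually_elim (use conv in \<open>auto simp: f_def convergent_LIMSEQ_iff\<close>)
  have bound: "(\<integral>\<^sup>+ x. ennreal ((Fs v n x - f x)\<^sup>2) \<partial>\<mu>) \<le> ennreal (K2 * tl v n)" if n: "n \<ge> 2" for n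
  proof -
    have "(\<integral>\<^sup>+ x. ennreal ((Fs v n x - f x)\<^sup>2) \<partial>\<mu>) =
        (\<integral>\<^sup>+ x. liminf (\<lambda>k. ennreal ((Fs v n x - Fs v (nk k) x)\<^sup>2)) \<partial>\<mu>)"
    proof (rule nn_integral_cong_AE)
      show "AE x in \<mu>. ennreal ((Fs v n x - f x)\<^sup>2) = liminf (\<lambda>k. ennreal ((Fs v n x - Fs v (nk k) x)\<^sup>2))"
        using aelim
      proof eventually_elim
        case (elim x)
        have "(\<lambda>k. ennreal ((Fs v n x - Fs v (nk k) x)\<^sup>2)) \<longlonglongrightarrow> ennreal ((Fs v n x - f x)\<^sup>2)"
          by (intro tendsto_ennrealI tendsto_power tendsto_diff tendsto_const elim)
        then show ?case by (rule lim_imp_Liminf[symmetric, OF trivial_limit_sequentially])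
      qed
    qed
    also have "\<dots> \<le> liminf (\<lambda>k. \<integral>\<^sup>+ x. ennreal ((Fs v n x - Fs v (nk k) x)\<^sup>2) \<partial>\<mu>)"
      by (rule nn_integral_liminf) (rule ennreal_meas[OF atomic_meas[OF atomic_comp[OF Fs_diff_atomic]]])
    also have "\<dots> \<le> liminf (\<lambda>k. ennreal (K2 * (tl v n + (1/4)^k)))"
    proof (rule Liminf_mono, rule always_eventually, rule allI)
      fix k
      have "(\<integral>\<^sup>+ x. ennreal ((Fs v n x - Fs v (nk k) x)\<^sup>2) \<partial>\<mu>) = ennreal (\<integral>x. (Fs v n x - Fs v (nk k) x)\<^sup>2 \<partial>\<mu>)"
        by (rule nn_L2[OF summ])
      also have "\<dots> \<le> ennreal (K2 * (tl v (nk k) + tl v n))"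
        by (rule ennreal_leI, rule L2_bound[OF summ nk(1) n])
      also have "\<dots> \<le> ennreal (K2 * (tl v n + (1/4)^k))"
        using nk(3)[of k] K2_nonneg by (intro ennreal_leI mult_left_mono) auto
      finally show "(\<integral>\<^sup>+ x. ennreal ((Fs v n x - Fs v (nk k) x)\<^sup>2) \<partial>\<mu>) \<le> ennreal (K2 * (tl v n + (1/4)^k))" .
    qed
    also have "\<dots> = ennreal (K2 * tl v n)"
    proof (rule lim_imp_Liminf[OF trivial_limit_sequentially])
      have "(\<lambda>k. K2 * (tl v n + (1/4::real)^k)) \<longlonglongrightarrow> K2 * (tl v n + 0)"
        by (intro tendsto_mult tendsto_add tendsto_const LIMSEQ_power_zero) simp
      then show "(\<lambda>k. ennreal (K2 * (tl v n + (1/4)^k))) \<longlonglongrightarrow> ennreal (K2 * tl v n)"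
        by (intro tendsto_ennrealI) simp
    qed
    finally show ?thesis .
  qed
  have lim0: "(\<lambda>n. \<integral>\<^sup>+ x. ennreal ((Fs v n x - f x)\<^sup>2) \<partial>\<mu>) \<longlonglongrightarrow> 0"
  proof (rule tendsto_sandwich[of "\<lambda>_. 0" _ _ "\<lambda>n. ennreal (K2 * tl v n)"])
    show "\<forall>\<^sub>F n in sequentially. 0 \<le> (\<integral>\<^sup>+ x. ennreal ((Fs v n x - f x)\<^sup>2) \<partial>\<mu>)" by simp
    show "\<forall>\<^sub>F n in sequentially. (\<integral>\<^sup>+ x. ennreal ((Fs v n x - f x)\<^sup>2) \<partial>\<mu>) \<le> ennreal (K2 * tl v n)"
      unfolding eventually_sequentially using bound by blast
    show "(\<lambda>_. 0::ennreal) \<longlonglongrightarrow> 0" by simp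
    have "(\<lambda>n. K2 * tl v n) \<longlonglongrightarrow> K2 * 0" by (intro tendsto_mult tendsto_const tl_lim[OF summ])
    then show "(\<lambda>n. ennreal (K2 * tl v n)) \<longlonglongrightarrow> 0" using ennreal_0 by (metis mult_zero_right tendsto_ennrealI)
  qed
  have fin: "(\<integral>\<^sup>+ x. ennreal ((f x)\<^sup>2) \<partial>\<mu>) < \<infinity>"
  proof -
    have pw: "ennreal ((f x)\<^sup>2) \<le> 2 * ennreal ((Fs v 2 x - f x)\<^sup>2) + ennreal (2 * (Fs v 2 x)\<^sup>2)" for x
    proof -
      have e: "2 * (Fs v 2 x - f x)\<^sup>2 + 2 * (Fs v 2 x)\<^sup>2 - (f x)\<^sup>2 = (2 * Fs v 2 x - f x)\<^sup>2"
        by (simp add: power2_eq_square algebra_simps)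
      have "(f x)\<^sup>2 \<le> 2 * (Fs v 2 x - f x)\<^sup>2 + 2 * (Fs v 2 x)\<^sup>2"
        using e zero_le_power2[of "2 * Fs v 2 x - f x"] by linarith
      then have "ennreal ((f x)\<^sup>2) \<le> ennreal (2 * (Fs v 2 x - f x)\<^sup>2 + 2 * (Fs v 2 x)\<^sup>2)" by (rule ennreal_leI)
      also have "\<dots> = ennreal (2 * (Fs v 2 x - f x)\<^sup>2) + ennreal (2 * (Fs v 2 x)\<^sup>2)"
        by (rule ennreal_plus) simp_all
      also have "ennreal (2 * (Fs v 2 x - f x)\<^sup>2) = ennreal 2 * ennreal ((Fs v 2 x - f x)\<^sup>2)"
        by (rule ennreal_mult) simp_all
      finally show ?thesis by simp
    qed
    have m0: "(\<lambda>x. (Fs v 2 x - f x)\<^sup>2) \<in> borel_measurable \<mu>"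
      by (intro borel_measurable_power borel_measurable_diff Fs_meas fm)
    have m1: "(\<lambda>x. ennreal ((Fs v 2 x - f x)\<^sup>2)) \<in> borel_measurable \<mu>"
      by (rule ennreal_meas[OF m0])
    have m1': "(\<lambda>x. 2 * ennreal ((Fs v 2 x - f x)\<^sup>2)) \<in> borel_measurable \<mu>"
      by (rule borel_measurable_times_ennreal[OF borel_measurable_const m1])
    have m2: "(\<lambda>x. ennreal (2 * (Fs v 2 x)\<^sup>2)) \<in> borel_measurable \<mu>"
      by (rule ennreal_meas[OF atomic_meas[OF atomic_comp[OF Fs_atomic]]])
    let ?X = "\<integral>\<^sup>+ x. ennreal ((Fs v 2 x - f x)\<^sup>2) \<partial>\<mu>"
    let ?Y = "\<integral>\<^sup>+ x. ennreal (2 * (Fs v 2 x)\<^sup>2) \<partial>\<mu>"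
    have i1: "(\<integral>\<^sup>+ x. ennreal ((f x)\<^sup>2) \<partial>\<mu>) \<le> (\<integral>\<^sup>+ x. 2 * ennreal ((Fs v 2 x - f x)\<^sup>2) + ennreal (2 * (Fs v 2 x)\<^sup>2) \<partial>\<mu>)"
      by (rule nn_integral_mono) (rule pw)
    have i2: "(\<integral>\<^sup>+ x. 2 * ennreal ((Fs v 2 x - f x)\<^sup>2) + ennreal (2 * (Fs v 2 x)\<^sup>2) \<partial>\<mu>) = (\<integral>\<^sup>+ x. 2 * ennreal ((Fs v 2 x - f x)\<^sup>2) \<partial>\<mu>) + ?Y"
      by (rule nn_integral_add[OF m1' m2])
    have i3: "(\<integral>\<^sup>+ x. 2 * ennreal ((Fs v 2 x - f x)\<^sup>2) \<partial>\<mu>) = 2 * ?X"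
      by (rule nn_integral_cmult[OF m1])
    have "?X \<le> ennreal (K2 * tl v 2)" by (rule bound) simp
    then have a: "?X < top" by (rule le_less_trans[OF _ ennreal_less_top])
    have "?Y = ennreal (\<integral>x. 2 * (Fs v 2 x)\<^sup>2 \<partial>\<mu>)"
      by (rule nn_integral_eq_integral[OF atomic_int[OF atomic_comp[OF Fs_atomic]]]) simp
    then have b: "?Y < top" by simp
    have c: "2 * ?X + ?Y < top" using a b by (simp add: ennreal_add_less_top ennreal_mult_less_top)
    have "(\<integral>\<^sup>+ x. ennreal ((f x)\<^sup>2) \<partial>\<mu>) \<le> 2 * ?X + ?Y" using i1 unfolding i2 i3 .
    then have "(\<integral>\<^sup>+ x. ennreal ((f x)\<^sup>2) \<partial>\<mu>) < top" using c by (rule le_less_trans)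
    then show ?thesis by simp
  qed
  show ?thesis using fm fin lim0 by blast
qed

end
end

theorem mainTheorem6:
  fixes T :: "'a::metric_space \<Rightarrow> 'a"
    and C :: "nat \<Rightarrow> nat" and h :: "nat \<Rightarrow> nat \<Rightarrow> nat" and B :: "nat \<Rightarrow> nat \<Rightarrow> 'a set"
    and \<mu> :: "'a measure" and v :: "nat \<Rightarrow> real"
  assumes cantor: "is_cantor_space (UNIV :: 'a set)"
    and homeo: "homeomorphism UNIV UNIV T (inv T)"
    and minimal: "minimal_system T"
    and inv_mu: "invariant_prob T \<mu>"
    and unique: "\<And>\<nu>. invariant_prob T \<nu> \<Longrightarrow> \<nu> = \<mu>"
    and KR: "KR_sequence T C h B"
    and LR: "linearly_recurrent_KR C h"
    and M_ge2: "\<And>n l k. n \<ge> 2 \<Longrightarrow> l \<in> {1..C n} \<Longrightarrow> k \<in> {1..C (n-1)} \<Longrightarrow> KR_M T h B n l k \<ge> 2"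
    and H1: "\<And>k. k \<in> {1..C 1} \<Longrightarrow> h 1 k = 1"
    and summ: "summable (\<lambda>n. (KR_Pv_norm T C h B v (Suc (Suc n)))\<^sup>2)"
  shows "\<exists>f \<in> borel_measurable \<mu>. (\<integral>\<^sup>+ x. ennreal ((f x)\<^sup>2) \<partial>\<mu>) < \<infinity> \<and>
           (\<lambda>n. \<integral>\<^sup>+ x. ennreal ((KR_g T C h B v n x - (\<integral>y. KR_g T C h B v n y \<partial>\<mu>) - f x)\<^sup>2) \<partial>\<mu>)
             \<longlonglongrightarrow> 0"
proof -
  have hom: "homeomorphism UNIV UNIV T (inv T)" by (rule homeo)
  have contT: "continuous_on UNIV T" using hom unfolding homeomorphism_def by simp
  have bijT: "bij T"
  proof (rule bijI)
    have "\<forall>x\<in>UNIV. inv T (T x) = x" using hom unfolding homeomorphism_def by blast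
    then have "\<And>x. inv T (T x) = x" by simp
    then show "inj T" by (rule inj_on_inverseI)
    show "surj T" using hom unfolding homeomorphism_def by simp
  qed
  obtain L where L: "\<forall>n\<ge>1. \<forall>l\<in>{1..C n}. \<forall>k\<in>{1..C (n-1)}. real (h n l) \<le> L * real (h (n-1) k)"
    using LR unfolding linearly_recurrent_KR_def by blast
  have LR': "real (h n l) \<le> max L 2 * real (h (n-1) k)"
    if "n \<ge> 1" "l \<in> {1..C n}" "k \<in> {1..C (n-1)}" for n l k
  proof -
    have "real (h n l) \<le> L * real (h (n-1) k)" using L that by blast
    also have "\<dots> \<le> max L 2 * real (h (n-1) k)" by (intro mult_right_mono) auto
    finally show ?thesis .
  qed
  interpret K: KRsys T C h B \<mu> "max L 2"
    apply unfold_locales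
          apply (rule bijT)
         apply (rule contT)
        apply (rule KR)
       apply (rule inv_mu)
      apply simp
     apply (rule LR'; assumption)
    apply (rule M_ge2; assumption)
    done
  have s: "summable (\<lambda>n. (K.pn v (Suc (Suc n)))\<^sup>2)" using summ unfolding K.pn_def .
  obtain f where f: "f \<in> borel_measurable \<mu>" "(\<integral>\<^sup>+ x. ennreal ((f x)\<^sup>2) \<partial>\<mu>) < \<infinity>"
    "(\<lambda>n. \<integral>\<^sup>+ x. ennreal ((K.Fs v n x - f x)\<^sup>2) \<partial>\<mu>) \<longlonglongrightarrow> 0"
    using K.L2_limit[OF s] by blast
  show ?thesis using f unfolding K.g_Fs by blast
qed

end
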